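(* Let $\mathcal{H} = L^2(\mathbb{R})$ in the momentum representation and let $T$ be the operator $T = i(2p)^{-1}\frac{d}{dp} + i\frac{d}{dp}(2p)^{-1}$ (i.e. $T=(2p)^{-1}q+q(2p)^{-1}$ with $q=i\,d/dp$) on the domain $\mathcal{D}(T)$ of infinitely differentiable functions with compact support contained in $\mathbb{R}\setminus\{0\}$. For $t\in\mathbb{R}$, $\alpha\in\{+1,-1\}$ let $\psi_{t\alpha}(p) = \frac{1}{\sqrt{2\pi}}\theta(\alpha p)\sqrt{|p|}\exp(-itp^2/2)$ ($\theta$ the Heaviside function), let $\phi(t,\alpha)=\int_{\mathbb{R}}\overline{\psi_{t\alpha}(p)}\phi(p)\,dp$, and let $\tau$ be the positive-operator-valued measure on $\mathbb{R}$ given by $\langle\phi|\tau(X)|\phi\rangle=\sum_{\alpha=\pm1}\int_X|\phi(t,\alpha)|^2\,dt$ for Borel $X$. Then for every $\phi\in\mathcal{D}(T)$ with $\langle\phi|\phi\rangle=1$, $$\langle\phi|T|\phi\rangle=\int_{\mathbb{R}} t\,\langle\phi|\tau(dt)|\phi\rangle,\qquad \langle\phi|T^2|\phi\rangle=\int_{\mathbb{R}} t^2\,\langle\phi|\tau(dt)|\phi\rangle,$$ and consequently $\sigma_T^2=\operatorname{var}(\tau,\phi)$, where $\sigma_T^2=\langle\phi|T^2|\phi\rangle-\langle\phi|T|\phi\rangle^2$.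
   Context: For a POV-measure $\tau$ on $\mathbb{R}$ and a unit vector $\phi$, $\tau_\phi(X)=\langle\phi|\tau(X)|\phi\rangle$ is a probability measure; $\operatorname{mean}(\tau,\phi)=\int\lambda\,\tau_\phi(d\lambda)$ and $\operatorname{var}(\tau,\phi)=\int\lambda^2\,\tau_\phi(d\lambda)-(\operatorname{mean}(\tau,\phi))^2$. *)

theory Defs
  imports "HOL-Analysis.Analysis"
begin

definition smooth_fun :: "(real \<Rightarrow> complex) \<Rightarrow> bool" where
  "smooth_fun f \<longleftrightarrow> (\<exists>D :: nat \<Rightarrow> real \<Rightarrow> complex. D 0 = f \<and>
      (\<forall>n x. (D n has_vector_derivative D (Suc n) x) (at x)))"

definition supp_cl :: "(real \<Rightarrow> complex) \<Rightarrow> real set" where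
  "supp_cl f = closure {p. f p \<noteq> 0}"

definition domT :: "(real \<Rightarrow> complex) set" where
  "domT = {f. smooth_fun f \<and> compact (supp_cl f) \<and> supp_cl f \<subseteq> - {0}}"

definition opT :: "(real \<Rightarrow> complex) \<Rightarrow> real \<Rightarrow> complex" where
  "opT f p = \<i> * complex_of_real (1 / (2 * p)) * vector_derivative f (at p)
           + \<i> * vector_derivative (\<lambda>x. complex_of_real (1 / (2 * x)) * f x) (at p)"

definition inner_L2 :: "(real \<Rightarrow> complex) \<Rightarrow> (real \<Rightarrow> complex) \<Rightarrow> complex" where
  "inner_L2 f g = (LINT p|lborel. cnj (f p) * g p)"

definition heaviside :: "real \<Rightarrow> real" where
  "heaviside x = (if x \<ge> 0 then 1 else 0)"

definition psi :: "real \<Rightarrow> real \<Rightarrow> real \<Rightarrow> complex" where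
  "psi t \<alpha> p = complex_of_real (1 / sqrt (2 * pi) * heaviside (\<alpha> * p) * sqrt \<bar>p\<bar>)
                 * exp (- \<i> * complex_of_real (t * p\<^sup>2 / 2))"

definition phi_trans :: "(real \<Rightarrow> complex) \<Rightarrow> real \<Rightarrow> real \<Rightarrow> complex" where
  "phi_trans f t \<alpha> = (LINT p|lborel. cnj (psi t \<alpha> p) * f p)"

text \<open>The probability measure tau_phi(X) = <phi|tau(X)|phi> = sum_alpha int_X |phi(t,alpha)|^2 dt.\<close>
definition tau_phi :: "(real \<Rightarrow> complex) \<Rightarrow> real measure" where
  "tau_phi f = density lborel (\<lambda>t. ennreal (\<Sum>\<alpha>\<in>{1, -1::real}. (cmod (phi_trans f t \<alpha>))\<^sup>2))"

definition mean_tau :: "(real \<Rightarrow> complex) \<Rightarrow> real" where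
  "mean_tau f = (\<integral>x. x \<partial>tau_phi f)"

definition var_tau :: "(real \<Rightarrow> complex) \<Rightarrow> real" where
  "var_tau f = (\<integral>x. x\<^sup>2 \<partial>tau_phi f) - (mean_tau f)\<^sup>2"

definition sigmaT_sq :: "(real \<Rightarrow> complex) \<Rightarrow> complex" where
  "sigmaT_sq f = inner_L2 f (opT (opT f)) - (inner_L2 f (opT f))\<^sup>2"

end

theory Submission imports Defs "HOL-Probability.Probability" begin


lemma gauss_integrable: "integrable lborel (\<lambda>s::real. exp (-(s^2)/2))"
proof -
  have "integrable lborel (\<lambda>x. sqrt (2*pi) * (std_normal_density x * x^0))"
    using integrable_std_normal_moment[of 0] by (rule integrable_mult_right)
  then show ?thesis by (simp add: std_normal_density_def)
qed

lemma gauss_integral: "(\<integral>s. exp (-(s^2)/2) \<partial>lborel) = sqrt (2*pi)"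
proof -
  have "(\<integral>x. sqrt (2*pi) * (std_normal_density x * x^(2*0)) \<partial>lborel) = sqrt (2*pi)"
    using integral_std_normal_moment_even[of 0] by simp
  then show ?thesis by (simp add: std_normal_density_def)
qed

lemma gauss_ft:
  "(\<integral>s. exp (\<i> * complex_of_real (x * s)) * complex_of_real (exp (-(s^2)/2)) \<partial>lborel)
     = complex_of_real (sqrt (2*pi) * exp (-(x^2)/2))"
proof -
  have "char std_normal_distribution x = complex_of_real (exp (-(x^2)/2))"
    by (simp add: char_std_normal_distribution)
  moreover have "char std_normal_distribution x = (\<integral>s. std_normal_density s *\<^sub>R exp (\<i> * complex_of_real (x * s)) \<partial>lborel)"
    unfolding char_def by (subst integral_density) auto
  ultimately have e: "(\<integral>s. std_normal_density s *\<^sub>R exp (\<i> * complex_of_real (x * s)) \<partial>lborel) = complex_of_real (exp (-(x^2)/2))"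
    by simp
  have "(\<integral>s. exp (\<i> * complex_of_real (x * s)) * complex_of_real (exp (-(s^2)/2)) \<partial>lborel)
     = (\<integral>s. complex_of_real (sqrt (2*pi)) * (std_normal_density s *\<^sub>R exp (\<i> * complex_of_real (x * s))) \<partial>lborel)"
    by (intro Bochner_Integration.integral_cong) (auto simp: std_normal_density_def scaleR_conv_of_real)
  also have "\<dots> = complex_of_real (sqrt (2*pi)) * complex_of_real (exp (-(x^2)/2))"
    by (simp only: integral_mult_right_zero e)
  finally show ?thesis by simp
qed

lemma gauss_ft_scaled:
  assumes "\<sigma> > 0"
  shows "(\<integral>t. exp (\<i> * complex_of_real (t * u)) * complex_of_real (exp (-((\<sigma>*t)^2)/2)) \<partial>lborel)
     = complex_of_real (sqrt (2*pi) / \<sigma> * exp (-((u/\<sigma>)^2)/2))"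
proof -
  have "(\<integral>t. exp (\<i> * complex_of_real (t * u)) * complex_of_real (exp (-((\<sigma>*t)^2)/2)) \<partial>lborel)
    = \<bar>1/\<sigma>\<bar> *\<^sub>R (\<integral>s. exp (\<i> * complex_of_real ((0 + (1/\<sigma>) * s) * u)) * complex_of_real (exp (-((\<sigma>*(0 + (1/\<sigma>) * s))^2)/2)) \<partial>lborel)"
    by (rule lborel_integral_real_affine) (use assms in auto)
  also have "\<dots> = (1/\<sigma>) *\<^sub>R (\<integral>s. exp (\<i> * complex_of_real ((u/\<sigma>) * s)) * complex_of_real (exp (-(s^2)/2)) \<partial>lborel)"
    using assms by (simp add: field_simps)
  also have "\<dots> = complex_of_real (sqrt (2*pi) / \<sigma> * exp (-((u/\<sigma>)^2)/2))"
    unfolding gauss_ft by (simp add: scaleR_conv_of_real)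
  finally show ?thesis .
qed



definition FT :: "(real \<Rightarrow> complex) \<Rightarrow> real \<Rightarrow> complex" where
  "FT g t = (\<integral>x. exp (\<i> * complex_of_real (t * x)) * g x \<partial>lborel)"

lemma borel_measurable_cnj_comp[measurable]:
  fixes f :: "'a \<Rightarrow> complex"
  assumes "f \<in> borel_measurable M"
  shows "(\<lambda>x. cnj (f x)) \<in> borel_measurable M"
proof -
  have "cnj \<in> borel_measurable borel"
    by (rule borel_measurable_continuous_onI) (intro continuous_intros)
  from measurable_compose[OF assms this] show ?thesis by simp
qed

lemma cs_integrable:
  fixes h :: "real \<Rightarrow> complex"
  assumes "continuous_on {A..B} h" "\<And>x. h x \<noteq> 0 \<Longrightarrow> x \<in> {A..B}"
  shows "integrable lborel h" "integral\<^sup>L lborel h = integral {A..B} h"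
proof -
  have eq: "h = (\<lambda>x. indicator {A..B} x *\<^sub>R h x)"
    using assms(2) by (auto simp: indicator_def fun_eq_iff)
  show "integrable lborel h"
    by (subst eq) (rule borel_integrable_compact[OF compact_Icc assms(1)])
  have "set_integrable lborel {A..B} h" unfolding set_integrable_def
    by (rule borel_integrable_compact[OF compact_Icc assms(1)])
  from set_borel_integral_eq_integral(2)[OF this] show "integral\<^sup>L lborel h = integral {A..B} h"
    unfolding set_lebesgue_integral_def by (subst eq) simp
qed

lemma cs_bound:
  fixes h :: "real \<Rightarrow> complex"
  assumes "continuous_on {A..B} h" "\<And>x. h x \<noteq> 0 \<Longrightarrow> x \<in> {A..B}"
  obtains M where "M \<ge> 0" "\<And>x. norm (h x) \<le> M"
proof -
  have "compact (h ` {A..B})" by (rule compact_continuous_image[OF assms(1) compact_Icc])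
  then obtain M where M: "M > 0" "\<And>y. y \<in> h ` {A..B} \<Longrightarrow> norm y \<le> M"
    using compact_imp_bounded bounded_pos by metis
  have "norm (h x) \<le> M" for x
    using M assms(2)[of x] by (cases "h x = 0") auto
  then show ?thesis using that M(1) by (meson less_le)
qed

lemma fubini_swap:
  fixes F :: "real \<Rightarrow> real \<Rightarrow> complex" and a b :: "real \<Rightarrow> real"
  assumes m: "(\<lambda>(x,y). F x y) \<in> borel_measurable (lborel \<Otimes>\<^sub>M lborel)"
    and bd: "\<And>x y. norm (F x y) \<le> a x * b y" and ia: "integrable lborel a" and ib: "integrable lborel b"
  shows "(\<integral>x. (\<integral>y. F x y \<partial>lborel) \<partial>lborel) = (\<integral>y. (\<integral>x. F x y \<partial>lborel) \<partial>lborel)"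
proof -
  have [measurable]: "a \<in> borel_measurable lborel" "b \<in> borel_measurable lborel"
    using ia ib by auto
  have "integrable (lborel \<Otimes>\<^sub>M lborel) (\<lambda>(x,y). a x * b y)"
  proof (rule lborel_pair.Fubini_integrable)
    show "(\<lambda>(x,y). a x * b y) \<in> borel_measurable (lborel \<Otimes>\<^sub>M lborel)" by measurable
    have "integrable lborel (\<lambda>x. \<bar>a x\<bar> * (\<integral>y. \<bar>b y\<bar> \<partial>lborel))"
      using ia by (intro integrable_mult_left) auto
    then show "integrable lborel (\<lambda>x. \<integral>y. norm (case (x, y) of (x, y) \<Rightarrow> a x * b y) \<partial>lborel)"
      by (simp add: abs_mult)
    show "AE x in lborel. integrable lborel (\<lambda>y. case (x, y) of (x, y) \<Rightarrow> a x * b y)"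
      using ib by (auto intro: integrable_mult_right)
  qed
  then have "integrable (lborel \<Otimes>\<^sub>M lborel) (\<lambda>(x,y). F x y)"
  proof (rule Bochner_Integration.integrable_bound)
    show "(\<lambda>(x,y). F x y) \<in> borel_measurable (lborel \<Otimes>\<^sub>M lborel)" by (rule m)
    show "AE x in lborel \<Otimes>\<^sub>M lborel. norm (case x of (x, y) \<Rightarrow> F x y) \<le> norm (case x of (x, y) \<Rightarrow> a x * b y)"
      using bd by (auto split: prod.splits intro: order_trans[OF _ abs_ge_self])
  qed
  then show ?thesis using lborel_pair.Fubini_integral[of F] by simp
qed

lemma cexp_lemma: "cnj (exp (\<i> * complex_of_real a)) * exp (\<i> * complex_of_real c) = exp (\<i> * complex_of_real (c - a))"
proof -
  have "cnj (exp (\<i> * complex_of_real a)) = exp (- (\<i> * complex_of_real a))" by (simp add: exp_cnj)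
  moreover have "exp (- (\<i> * complex_of_real a)) * exp (\<i> * complex_of_real c) = exp (- (\<i> * complex_of_real a) + \<i> * complex_of_real c)"
    by (rule mult_exp_exp)
  moreover have "- (\<i> * complex_of_real a) + \<i> * complex_of_real c = \<i> * complex_of_real (c - a)" by (simp add: algebra_simps)
  ultimately show ?thesis by simp
qed



lemma parseval_ft:
  fixes g1 g2 :: "real \<Rightarrow> complex"
  assumes c1: "continuous_on UNIV g1" and c2: "continuous_on UNIV g2"
    and AB: "A \<le> B"
    and s1: "\<And>x. g1 x \<noteq> 0 \<Longrightarrow> x \<in> {A..B}" and s2: "\<And>x. g2 x \<noteq> 0 \<Longrightarrow> x \<in> {A..B}"
    and int: "integrable lborel (\<lambda>t. cnj (FT g1 t) * FT g2 t)"
  shows "(\<integral>t. cnj (FT g1 t) * FT g2 t \<partial>lborel) = 2 * pi * (\<integral>x. cnj (g1 x) * g2 x \<partial>lborel)"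
proof -
  have m1[measurable]: "g1 \<in> borel_measurable borel" using c1 by (rule borel_measurable_continuous_onI)
  have m2[measurable]: "g2 \<in> borel_measurable borel" using c2 by (rule borel_measurable_continuous_onI)
  have [measurable]: "g1 \<in> borel_measurable lborel" "g2 \<in> borel_measurable lborel" by simp_all
  obtain M1 where M1: "M1 \<ge> 0" "\<And>x. norm (g1 x) \<le> M1"
    using cs_bound[of A B g1] c1 s1 continuous_on_subset by blast
  obtain M2 where M2: "M2 \<ge> 0" "\<And>x. norm (g2 x) \<le> M2"
    using cs_bound[of A B g2] c2 s2 continuous_on_subset by blast
  have ig1: "integrable lborel g1"
    using cs_integrable(1)[of A B g1] c1 s1 continuous_on_subset by blast
  define L where "L = B - A"
  define h where "h u = (\<integral>x. cnj (g1 x) * g2 (x + u) \<partial>lborel)" for u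
  have hm[measurable]: "h \<in> borel_measurable lborel" unfolding h_def by measurable
  have hz: "h u = 0" if "u \<notin> {-L..L}" for u
  proof -
    have "cnj (g1 x) * g2 (x + u) = 0" for x
      using s1[of x] s2[of "x+u"] that unfolding L_def by (cases "g1 x = 0"; cases "g2 (x+u) = 0") auto
    then have "(\<lambda>x. cnj (g1 x) * g2 (x + u)) = (\<lambda>x. 0)" by (rule ext)
    then show ?thesis unfolding h_def by simp
  qed
  define Mh where "Mh = M1 * M2 * L"
  have Mh0: "Mh \<ge> 0" unfolding Mh_def L_def using M1 M2 AB by simp
  have hb: "norm (h u) \<le> Mh" for u
  proof -
    have "norm (cnj (g1 x) * g2 (x + u)) \<le> M1 * M2 * indicator {A..B} x" for x
      using s1[of x] M1 M2 by (cases "g1 x = 0") (auto simp: norm_mult intro: mult_mono)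
    moreover have "integrable lborel (\<lambda>x. M1 * M2 * indicator {A..B} x :: real)"
      by (intro integrable_mult_right integrable_real_indicator) (auto simp: emeasure_lborel_Icc_eq)
    moreover have "integrable lborel (\<lambda>x. cnj (g1 x) * g2 (x + u))"
      using calculation by (intro Bochner_Integration.integrable_bound[OF calculation(2)]) (auto intro: order_trans[OF _ abs_ge_self])
    ultimately have "norm (h u) \<le> (\<integral>x. M1 * M2 * indicator {A..B} x \<partial>lborel)"
      unfolding h_def using Bochner_Integration.integral_norm_bound_integral[where M=lborel and f="\<lambda>x. cnj (g1 x) * g2 (x + u)" and g="\<lambda>x. M1*M2*indicator {A..B} x"] by blast
    also have "\<dots> = Mh" using AB by (simp add: Mh_def L_def)
    finally show ?thesis .
  qed
  define \<sigma> :: "nat \<Rightarrow> real" where "\<sigma> n = 1 / real (Suc n)" for n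
  have \<sigma>pos: "\<sigma> n > 0" for n unfolding \<sigma>_def by simp
  have \<sigma>lim: "\<sigma> \<longlonglongrightarrow> 0"
    unfolding \<sigma>_def using LIMSEQ_Suc[OF lim_1_over_n] by simp
  have hlim: "(\<lambda>n. h (\<sigma> n * s)) \<longlonglongrightarrow> h 0" for s
  proof -
    have "(\<lambda>n. \<integral>x. cnj (g1 x) * g2 (x + \<sigma> n * s) \<partial>lborel) \<longlonglongrightarrow> (\<integral>x. cnj (g1 x) * g2 x \<partial>lborel)"
    proof (rule integral_dominated_convergence[where w="\<lambda>x. M2 * norm (g1 x)"])
      show "integrable lborel (\<lambda>x. M2 * norm (g1 x))" using ig1 by auto
      show "AE x in lborel. (\<lambda>n. cnj (g1 x) * g2 (x + \<sigma> n * s)) \<longlonglongrightarrow> cnj (g1 x) * g2 x"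
      proof
        fix x
        have "(\<lambda>n. x + \<sigma> n * s) \<longlonglongrightarrow> x + 0 * s" by (intro tendsto_intros \<sigma>lim)
        then have "(\<lambda>n. g2 (x + \<sigma> n * s)) \<longlonglongrightarrow> g2 x"
          using c2 by (intro isCont_tendsto_compose[where g=g2]) (auto simp: continuous_on_eq_continuous_at)
        then show "(\<lambda>n. cnj (g1 x) * g2 (x + \<sigma> n * s)) \<longlonglongrightarrow> cnj (g1 x) * g2 x"
          by (intro tendsto_intros)
      qed
      show "AE x in lborel. norm (cnj (g1 x) * g2 (x + \<sigma> n * s)) \<le> M2 * norm (g1 x)" for n
      proof (rule AE_I2)
        fix x
        have "norm (g1 x) * norm (g2 (x + \<sigma> n * s)) \<le> norm (g1 x) * M2"
          using M2(2) by (rule mult_left_mono) simp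
        then show "norm (cnj (g1 x) * g2 (x + \<sigma> n * s)) \<le> M2 * norm (g1 x)"
          by (simp add: norm_mult mult.commute)
      qed
    qed auto
    then show ?thesis unfolding h_def by simp
  qed
  have stepB: "cnj (FT g1 t) * FT g2 t = (\<integral>u. exp (\<i> * complex_of_real (t * u)) * h u \<partial>lborel)" for t
  proof -
    have "cnj (FT g1 t) * FT g2 t = (\<integral>x. cnj (exp (\<i> * complex_of_real (t * x)) * g1 x) * FT g2 t \<partial>lborel)"
      unfolding FT_def[of g1] by (simp only: Bochner_Integration.integral_cnj integral_mult_left_zero)
    also have "\<dots> = (\<integral>x. (\<integral>u. cnj (exp (\<i> * complex_of_real (t * x)) * g1 x) * (exp (\<i> * complex_of_real (t * (x + 1 * u))) * g2 (x + 1 * u)) \<partial>lborel) \<partial>lborel)"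
    proof (intro Bochner_Integration.integral_cong refl)
      fix x
      have "FT g2 t = \<bar>1\<bar> *\<^sub>R (\<integral>u. exp (\<i> * complex_of_real (t * (x + 1 * u))) * g2 (x + 1 * u) \<partial>lborel)"
        unfolding FT_def by (rule lborel_integral_real_affine) simp
      then show "cnj (exp (\<i> * complex_of_real (t * x)) * g1 x) * FT g2 t = (\<integral>u. cnj (exp (\<i> * complex_of_real (t * x)) * g1 x) * (exp (\<i> * complex_of_real (t * (x + 1 * u))) * g2 (x + 1 * u)) \<partial>lborel)"
        by simp
    qed
    also have "\<dots> = (\<integral>x. (\<integral>u. exp (\<i> * complex_of_real (t * u)) * (cnj (g1 x) * g2 (x + u)) \<partial>lborel) \<partial>lborel)"
    proof (intro Bochner_Integration.integral_cong refl)
      fix x u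
      have "cnj (exp (\<i> * complex_of_real (t * x))) * exp (\<i> * complex_of_real (t * (x + 1 * u))) = exp (\<i> * complex_of_real (t * u))"
        using cexp_lemma[of "t*x" "t*(x+1*u)"] by (simp add: algebra_simps)
      then show "cnj (exp (\<i> * complex_of_real (t * x)) * g1 x) * (exp (\<i> * complex_of_real (t * (x + 1 * u))) * g2 (x + 1 * u)) = exp (\<i> * complex_of_real (t * u)) * (cnj (g1 x) * g2 (x + u))"
        by (simp add: algebra_simps)
    qed
    also have "\<dots> = (\<integral>u. (\<integral>x. exp (\<i> * complex_of_real (t * u)) * (cnj (g1 x) * g2 (x + u)) \<partial>lborel) \<partial>lborel)"
    proof (rule fubini_swap[where a="\<lambda>x. M1 * indicator {A..B} x" and b="\<lambda>u. M2 * indicator {-L..L} u"])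
      show "(\<lambda>(x, y). exp (\<i> * complex_of_real (t * y)) * (cnj (g1 x) * g2 (x + y))) \<in> borel_measurable (lborel \<Otimes>\<^sub>M lborel)"
        by measurable
      show "integrable lborel (\<lambda>x. M1 * indicator {A..B} x)"
        by (intro integrable_mult_right integrable_real_indicator) (auto simp: emeasure_lborel_Icc_eq)
      show "integrable lborel (\<lambda>x. M2 * indicator {-L..L} x)"
        by (intro integrable_mult_right integrable_real_indicator) (auto simp: emeasure_lborel_Icc_eq)
      fix x u
      show "norm (exp (\<i> * complex_of_real (t * u)) * (cnj (g1 x) * g2 (x + u))) \<le> M1 * indicator {A..B} x * (M2 * indicator {-L..L} u)"
      proof (cases "g1 x = 0 \<or> g2 (x + u) = 0")
        case True then show ?thesis using M1 M2 by (auto simp: indicator_def)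
      next
        case False
        then have "x \<in> {A..B}" "u \<in> {-L..L}" using s1[of x] s2[of "x+u"] unfolding L_def by auto
        then show ?thesis using M1 M2 by (auto simp: norm_mult intro: mult_mono)
      qed
    qed
    also have "\<dots> = (\<integral>u. exp (\<i> * complex_of_real (t * u)) * h u \<partial>lborel)"
      unfolding h_def by simp
    finally show ?thesis .
  qed
  have hint: "integrable lborel (\<lambda>u. Mh * indicator {-L..L} u :: real)"
    by (intro integrable_mult_right integrable_real_indicator) (auto simp: emeasure_lborel_Icc_eq)
  have hbi: "norm (h u) \<le> Mh * indicator {-L..L} u" for u
    using hb[of u] hz[of u] by (cases "u \<in> {-L..L}") auto
  have eint: "integrable lborel (\<lambda>t. exp (-((s*t)^2)/2) :: real)" if "s > 0" for s :: real
  proof -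
    have "integrable lborel (\<lambda>t. exp (-((0 + s*t)^2)/2) :: real)"
      by (rule lborel_integrable_real_affine[OF gauss_integrable]) (use that in auto)
    then show ?thesis by simp
  qed
  have stepC: "(\<integral>t. complex_of_real (exp (-((s*t)^2)/2)) * (cnj (FT g1 t) * FT g2 t) \<partial>lborel)
      = (\<integral>v. h (s * v) * complex_of_real (sqrt (2*pi) * exp (-(v^2)/2)) \<partial>lborel)" if sp: "s > 0" for s :: real
  proof -
    have "(\<integral>t. complex_of_real (exp (-((s*t)^2)/2)) * (cnj (FT g1 t) * FT g2 t) \<partial>lborel)
       = (\<integral>t. (\<integral>u. complex_of_real (exp (-((s*t)^2)/2)) * (exp (\<i> * complex_of_real (t * u)) * h u) \<partial>lborel) \<partial>lborel)"
      by (simp only: stepB integral_mult_right_zero)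
    also have "\<dots> = (\<integral>u. (\<integral>t. complex_of_real (exp (-((s*t)^2)/2)) * (exp (\<i> * complex_of_real (t * u)) * h u) \<partial>lborel) \<partial>lborel)"
    proof (rule fubini_swap[where a="\<lambda>t. exp (-((s*t)^2)/2)" and b="\<lambda>u. Mh * indicator {-L..L} u"])
      show "(\<lambda>(x, y). complex_of_real (exp (-((s*x)^2)/2)) * (exp (\<i> * complex_of_real (x * y)) * h y)) \<in> borel_measurable (lborel \<Otimes>\<^sub>M lborel)"
        by measurable
      show "integrable lborel (\<lambda>t. exp (-((s*t)^2)/2))" using eint sp by blast
      show "integrable lborel (\<lambda>u. Mh * indicator {-L..L} u :: real)" by (rule hint)
      fix x y
      show "norm (complex_of_real (exp (-((s*x)^2)/2)) * (exp (\<i> * complex_of_real (x * y)) * h y)) \<le> exp (-((s*x)^2)/2) * (Mh * indicator {-L..L} y)"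
        using hbi[of y] by (simp add: norm_mult)
    qed
    also have "\<dots> = (\<integral>u. h u * (\<integral>t. exp (\<i> * complex_of_real (t * u)) * complex_of_real (exp (-((s*t)^2)/2)) \<partial>lborel) \<partial>lborel)"
    proof (intro Bochner_Integration.integral_cong refl)
      fix u
      have "(\<integral>t. complex_of_real (exp (-((s*t)^2)/2)) * (exp (\<i> * complex_of_real (t * u)) * h u) \<partial>lborel)
         = (\<integral>t. h u * (exp (\<i> * complex_of_real (t * u)) * complex_of_real (exp (-((s*t)^2)/2))) \<partial>lborel)"
        by (intro Bochner_Integration.integral_cong refl) (simp add: mult_ac)
      then show "(\<integral>t. complex_of_real (exp (-((s*t)^2)/2)) * (exp (\<i> * complex_of_real (t * u)) * h u) \<partial>lborel)
         = h u * (\<integral>t. exp (\<i> * complex_of_real (t * u)) * complex_of_real (exp (-((s*t)^2)/2)) \<partial>lborel)"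
        by (simp only: integral_mult_right_zero)
    qed
    also have "\<dots> = (\<integral>u. h u * complex_of_real (sqrt (2*pi) / s * exp (-((u/s)^2)/2)) \<partial>lborel)"
      by (simp only: gauss_ft_scaled[OF sp])
    also have "\<dots> = \<bar>s\<bar> *\<^sub>R (\<integral>v. h (0 + s * v) * complex_of_real (sqrt (2*pi) / s * exp (-(((0 + s * v)/s)^2)/2)) \<partial>lborel)"
      by (rule lborel_integral_real_affine) (use sp in auto)
    also have "\<dots> = (\<integral>v. h (s * v) * complex_of_real (sqrt (2*pi) * exp (-(v^2)/2)) \<partial>lborel)"
    proof -
      have "(\<integral>v. h (0 + s * v) * complex_of_real (sqrt (2*pi) / s * exp (-(((0 + s * v)/s)^2)/2)) \<partial>lborel)
         = (\<integral>v. complex_of_real (1/s) * (h (s * v) * complex_of_real (sqrt (2*pi) * exp (-(v^2)/2))) \<partial>lborel)"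
        using sp by (intro Bochner_Integration.integral_cong refl) (simp add: mult_ac)
      also have "\<dots> = complex_of_real (1/s) * (\<integral>v. h (s * v) * complex_of_real (sqrt (2*pi) * exp (-(v^2)/2)) \<partial>lborel)"
        by (rule integral_mult_right_zero)
      finally show ?thesis using sp by (simp add: scaleR_conv_of_real)
    qed
    finally show ?thesis .
  qed
  have pm[measurable]: "(\<lambda>t. cnj (FT g1 t) * FT g2 t) \<in> borel_measurable lborel"
    using int by auto
  have limL: "(\<lambda>n. \<integral>t. complex_of_real (exp (-((\<sigma> n*t)^2)/2)) * (cnj (FT g1 t) * FT g2 t) \<partial>lborel)
      \<longlonglongrightarrow> (\<integral>t. cnj (FT g1 t) * FT g2 t \<partial>lborel)"
  proof (rule integral_dominated_convergence[where w="\<lambda>t. norm (cnj (FT g1 t) * FT g2 t)"])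
    show "integrable lborel (\<lambda>t. norm (cnj (FT g1 t) * FT g2 t))" using int by auto
    show "AE t in lborel. (\<lambda>n. complex_of_real (exp (-((\<sigma> n*t)^2)/2)) * (cnj (FT g1 t) * FT g2 t)) \<longlonglongrightarrow> cnj (FT g1 t) * FT g2 t"
    proof
      fix t
      have "(\<lambda>n. complex_of_real (exp (-((\<sigma> n*t)^2)/2)) * (cnj (FT g1 t) * FT g2 t)) \<longlonglongrightarrow> complex_of_real (exp (-((0*t)^2)/2)) * (cnj (FT g1 t) * FT g2 t)"
        by (intro tendsto_intros \<sigma>lim) simp
      then show "(\<lambda>n. complex_of_real (exp (-((\<sigma> n*t)^2)/2)) * (cnj (FT g1 t) * FT g2 t)) \<longlonglongrightarrow> cnj (FT g1 t) * FT g2 t"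
        by simp
    qed
    show "AE t in lborel. norm (complex_of_real (exp (-((\<sigma> n*t)^2)/2)) * (cnj (FT g1 t) * FT g2 t)) \<le> norm (cnj (FT g1 t) * FT g2 t)" for n
    proof (rule AE_I2)
      fix t
      have "exp (-((\<sigma> n*t)^2)/2) \<le> 1" by simp
      then show "norm (complex_of_real (exp (-((\<sigma> n*t)^2)/2)) * (cnj (FT g1 t) * FT g2 t)) \<le> norm (cnj (FT g1 t) * FT g2 t)"
        by (simp only: norm_mult norm_of_real) (intro mult_left_le_one_le; simp)
    qed
  qed auto
  have limR: "(\<lambda>n. \<integral>v. h (\<sigma> n * v) * complex_of_real (sqrt (2*pi) * exp (-(v^2)/2)) \<partial>lborel)
      \<longlonglongrightarrow> (\<integral>v. h 0 * complex_of_real (sqrt (2*pi) * exp (-(v^2)/2)) \<partial>lborel)"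
  proof (rule integral_dominated_convergence[where w="\<lambda>v. Mh * (sqrt (2*pi) * exp (-(v^2)/2))"])
    show "integrable lborel (\<lambda>v. Mh * (sqrt (2*pi) * exp (-(v^2)/2)))"
      using gauss_integrable by (intro integrable_mult_right) auto
    show "AE v in lborel. (\<lambda>n. h (\<sigma> n * v) * complex_of_real (sqrt (2*pi) * exp (-(v^2)/2))) \<longlonglongrightarrow> h 0 * complex_of_real (sqrt (2*pi) * exp (-(v^2)/2))"
      by (intro AE_I2 tendsto_intros hlim)
    show "AE v in lborel. norm (h (\<sigma> n * v) * complex_of_real (sqrt (2*pi) * exp (-(v^2)/2))) \<le> Mh * (sqrt (2*pi) * exp (-(v^2)/2))" for n
      using hb by (intro AE_I2) (simp add: norm_mult mult_right_mono)
  qed auto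
  have "(\<integral>t. cnj (FT g1 t) * FT g2 t \<partial>lborel) = (\<integral>v. h 0 * complex_of_real (sqrt (2*pi) * exp (-(v^2)/2)) \<partial>lborel)"
    using LIMSEQ_unique[OF limL] limR stepC[OF \<sigma>pos] by simp
  also have "\<dots> = h 0 * complex_of_real (sqrt (2*pi) * sqrt (2*pi))"
  proof -
    have gi: "(\<integral>v. exp (-(v^2/2)) \<partial>lborel) = sqrt (2*pi)" using gauss_integral by simp
    show ?thesis by (simp add: gi del: real_sqrt_mult_self)
  qed
  also have "\<dots> = 2 * pi * h 0" by simp
  finally show ?thesis unfolding h_def by simp
qed



definition supp_in :: "real \<Rightarrow> real \<Rightarrow> (real \<Rightarrow> complex) \<Rightarrow> bool" where
  "supp_in a b f \<longleftrightarrow> (\<forall>p. f p \<noteq> 0 \<longrightarrow> a < \<bar>p\<bar> \<and> \<bar>p\<bar> < b)"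

definition lo :: "real \<Rightarrow> real \<Rightarrow> real \<Rightarrow> real" where "lo \<alpha> a b = (if \<alpha> = 1 then a else -b)"
definition hi :: "real \<Rightarrow> real \<Rightarrow> real \<Rightarrow> real" where "hi \<alpha> a b = (if \<alpha> = 1 then b else -a)"

definition gE :: "real \<Rightarrow> (real \<Rightarrow> complex) \<Rightarrow> real \<Rightarrow> complex" where
  "gE \<alpha> f E = (if E > 0 then f (\<alpha> * sqrt (2*E)) / complex_of_real (sqrt (sqrt (2*E))) else 0)"

lemma in_lohi: "\<alpha> \<in> {1,-1} \<Longrightarrow> p \<in> {lo \<alpha> a b..hi \<alpha> a b} \<longleftrightarrow> a \<le> \<alpha>*p \<and> \<alpha>*p \<le> b"
  by (auto simp: lo_def hi_def)

lemma alpha_sq: "\<alpha> \<in> {1,-1::real} \<Longrightarrow> \<alpha> * \<alpha> = 1" by auto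

lemma sub1:
  fixes k :: "real \<Rightarrow> complex"
  assumes "0 < a" "a \<le> b" "continuous_on {a..b} k"
  shows "((\<lambda>E. (1 / sqrt (2*E)) *\<^sub>R k (sqrt (2*E))) has_integral integral {a..b} k) {a^2/2..b^2/2}"
proof -
  have "((\<lambda>E. (1 / sqrt (2*E)) *\<^sub>R k (sqrt (2*E))) has_integral integral {sqrt (2*(a^2/2))..sqrt (2*(b^2/2))} k) {a^2/2..b^2/2}"
  proof (rule has_integral_substitution[where c=a and d=b])
    show "a^2/2 \<le> b^2/2" using assms by (simp add: power_mono)
    show "sqrt (2*(a^2/2)) \<le> sqrt (2*(b^2/2))" using assms by (simp add: power_mono)
    show "(\<lambda>E. sqrt (2*E)) ` {a^2/2..b^2/2} \<subseteq> {a..b}"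
    proof
      fix y assume "y \<in> (\<lambda>E. sqrt (2*E)) ` {a^2/2..b^2/2}"
      then obtain E where E: "E \<in> {a^2/2..b^2/2}" "y = sqrt (2*E)" by auto
      have "a^2 \<le> 2*E" "2*E \<le> b^2" using E(1) by auto
      then have "sqrt (a^2) \<le> sqrt (2*E)" "sqrt (2*E) \<le> sqrt (b^2)" by (auto intro!: real_sqrt_le_mono simp del: real_sqrt_abs)
      moreover have "\<bar>a\<bar> = a" "\<bar>b\<bar> = b" using assms by auto
      ultimately show "y \<in> {a..b}" using E by auto
    qed
    show "continuous_on {a..b} k" by fact
    fix x assume x: "x \<in> {a^2/2..b^2/2}"
    then have xp: "x > 0" using assms by (auto intro: less_le_trans[of 0 "a^2/2"])
    have d1: "(sqrt has_real_derivative inverse (sqrt (2*x)) / 2) (at (2*x))" using xp by (intro DERIV_real_sqrt) simp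
    have d2: "((\<lambda>E. 2*E) has_real_derivative 2) (at x)" by (auto intro!: derivative_eq_intros)
    have "((\<lambda>E. sqrt (2*E)) has_real_derivative (inverse (sqrt (2*x)) / 2 * 2)) (at x)"
      using DERIV_chain2[OF d1 d2] by simp
    then show "((\<lambda>E. sqrt (2*E)) has_real_derivative 1 / sqrt (2*x)) (at x within {a^2/2..b^2/2})"
      by (auto intro: has_field_derivative_at_within simp: field_simps)
  qed
  then show ?thesis using assms by simp
qed

lemma sub:
  fixes k :: "real \<Rightarrow> complex"
  assumes "\<alpha> \<in> {1,-1}" "0 < a" "a \<le> b" "continuous_on {lo \<alpha> a b..hi \<alpha> a b} k"
  shows "((\<lambda>E. (1 / sqrt (2*E)) *\<^sub>R k (\<alpha> * sqrt (2*E))) has_integral integral {lo \<alpha> a b..hi \<alpha> a b} k) {a^2/2..b^2/2}"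
proof (cases "\<alpha> = 1")
  case True then show ?thesis using sub1[of a b k] assms by (simp add: lo_def hi_def)
next
  case False
  then have al: "\<alpha> = -1" using assms by auto
  have k: "continuous_on {-b..-a} k" using assms(4) al by (simp add: lo_def hi_def)
  have c: "continuous_on {a..b} (\<lambda>p. k (-p))"
    by (rule continuous_on_compose2[OF k]) (auto intro: continuous_intros)
  have "integral {-b..-a} (\<lambda>x. k (- (- x))) = integral {a..b} (\<lambda>p. k (-p))"
    by (rule Henstock_Kurzweil_Integration.integral_reflect_real)
  then show ?thesis using sub1[OF assms(2,3) c] al by (simp add: lo_def hi_def)
qed

lemma cont_two_opens:
  assumes "open U" "open V" "U \<union> V = UNIV" "continuous_on U f" "continuous_on V f"
  shows "continuous_on UNIV f"
  using continuous_on_open_Union[of "{U,V}" f] assms by auto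

lemma gE_cont:
  assumes "\<alpha> \<in> {1,-1}" "0 < a" "continuous_on UNIV f" "supp_in a b f"
  shows "continuous_on UNIV (gE \<alpha> f)"
proof (rule cont_two_opens[of "{0<..}" "{..<a^2/2}"])
  have "a^2 > 0" using assms by simp
  then show "{0<..} \<union> {..<a^2/2} = (UNIV :: real set)" by (auto simp: not_less intro: le_less_trans[of _ 0])
  have "continuous_on {0<..} (\<lambda>E. f (\<alpha> * sqrt (2*E)) / complex_of_real (sqrt (sqrt (2*E))))"
    by (intro continuous_intros continuous_on_compose2[OF assms(3)]) auto
  then show "continuous_on {0<..} (gE \<alpha> f)"
    by (rule continuous_on_cong[THEN iffD1, rotated 2]) (auto simp: gE_def)
  have "gE \<alpha> f E = 0" if "E < a^2/2" for E
  proof (cases "E > 0")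
    case True
    have "sqrt (2*E) < sqrt (a^2)" using that True by (intro real_sqrt_less_mono) auto
    then have "\<bar>\<alpha> * sqrt (2*E)\<bar> < a" using assms True by (auto simp: abs_mult)
    then have "f (\<alpha> * sqrt (2*E)) = 0" using assms(4) unfolding supp_in_def by force
    then show ?thesis by (simp add: gE_def)
  qed (simp add: gE_def)
  then show "continuous_on {..<a^2/2} (gE \<alpha> f)"
    using continuous_on_cong[of "{..<a^2/2}" "{..<a^2/2}" "gE \<alpha> f" "\<lambda>_. 0"] by auto
qed auto

lemma gE_supp:
  assumes "\<alpha> \<in> {1,-1}" "0 < a" "supp_in a b f" "gE \<alpha> f E \<noteq> 0"
  shows "E \<in> {a^2/2..b^2/2}"
proof -
  have E: "E > 0" "f (\<alpha> * sqrt (2*E)) \<noteq> 0" using assms(4) by (auto simp: gE_def split: if_splits)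
  then have "a < \<bar>\<alpha> * sqrt (2*E)\<bar>" "\<bar>\<alpha> * sqrt (2*E)\<bar> < b" using assms(3) unfolding supp_in_def by auto
  then have "a < sqrt (2*E)" "sqrt (2*E) < b" using assms(1) E by (auto simp: abs_mult)
  then have "a^2 < (sqrt (2*E))^2" "(sqrt (2*E))^2 < b^2"
    using assms(2) E by (metis power_strict_mono zero_le_numeral less_imp_le real_sqrt_ge_zero mult_nonneg_nonneg zero_less_numeral less_le_trans)+
  then show ?thesis using E by auto
qed



lemma psi_cnj: "cnj (psi t \<alpha> p) = complex_of_real (1 / sqrt (2*pi) * heaviside (\<alpha>*p) * sqrt \<bar>p\<bar>) * exp (\<i> * complex_of_real (t * p^2 / 2))"
  by (simp add: psi_def exp_cnj)

lemma phi_rep: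
  assumes al: "\<alpha> \<in> {1,-1}" and a: "0 < a" "a \<le> b" and fc: "continuous_on UNIV f" and fs: "supp_in a b f"
  shows "phi_trans f t \<alpha> = complex_of_real (1 / sqrt (2*pi)) * FT (gE \<alpha> f) t"
proof -
  define K where "K p = complex_of_real (1 / sqrt (2*pi) * sqrt (\<alpha>*p)) * exp (\<i> * complex_of_real (t * p^2 / 2)) * f p" for p
  define I where "I = {lo \<alpha> a b..hi \<alpha> a b}"
  have zero: "p \<in> I" if "cnj (psi t \<alpha> p) * f p \<noteq> 0" for p
  proof -
    have fp: "a < \<bar>p\<bar>" "\<bar>p\<bar> < b" using that fs unfolding supp_in_def by auto
    have "heaviside (\<alpha>*p) \<noteq> 0" using that by (auto simp: psi_cnj)
    then have "\<alpha>*p \<ge> 0" by (auto simp: heaviside_def split: if_splits)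
    then have "\<bar>p\<bar> = \<alpha>*p" using al by auto
    then show ?thesis using fp al unfolding I_def by (subst in_lohi) auto
  qed
  have eqK: "cnj (psi t \<alpha> p) * f p = K p" if "p \<in> I" for p
  proof -
    have "a \<le> \<alpha>*p" using that al unfolding I_def by (subst (asm) in_lohi) auto
    then have "\<alpha>*p > 0" using a by auto
    moreover have "\<bar>p\<bar> = \<alpha>*p" using al \<open>\<alpha>*p > 0\<close> by auto
    ultimately show ?thesis by (simp add: psi_cnj K_def heaviside_def)
  qed
  have contK: "continuous_on I K" unfolding K_def
    by (intro continuous_intros continuous_on_subset[OF fc]) auto
  have cont: "continuous_on I (\<lambda>p. cnj (psi t \<alpha> p) * f p)"
    using continuous_on_cong[of I I "\<lambda>p. cnj (psi t \<alpha> p) * f p" K] contK eqK by auto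
  have gc: "continuous_on UNIV (gE \<alpha> f)" by (rule gE_cont[OF al a(1) fc fs])
  have "phi_trans f t \<alpha> = integral I (\<lambda>p. cnj (psi t \<alpha> p) * f p)"
    unfolding phi_trans_def I_def using cs_integrable(2)[OF cont[unfolded I_def]] zero[unfolded I_def] by blast
  also have "\<dots> = integral I K" by (rule Henstock_Kurzweil_Integration.integral_cong) (rule eqK)
  also have "\<dots> = integral {a^2/2..b^2/2} (\<lambda>E. (1 / sqrt (2*E)) *\<^sub>R K (\<alpha> * sqrt (2*E)))"
    unfolding I_def by (rule integral_unique[symmetric], rule sub[OF al a]) (use contK I_def in simp)
  also have "\<dots> = integral {a^2/2..b^2/2} (\<lambda>E. complex_of_real (1 / sqrt (2*pi)) * (exp (\<i> * complex_of_real (t * E)) * gE \<alpha> f E))"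
  proof (rule Henstock_Kurzweil_Integration.integral_cong)
    fix E assume E: "E \<in> {a^2/2..b^2/2}"
    then have Ep: "E > 0" using a by (auto intro: less_le_trans[of 0 "a^2/2"])
    define r where "r = sqrt (sqrt (2*E))"
    have rp: "r > 0" using Ep by (simp add: r_def)
    have rr: "sqrt (2*E) = r * r" using Ep by (simp add: r_def)
    have s1: "sqrt (\<alpha> * (\<alpha> * sqrt (2*E))) = r" using alpha_sq[OF al] by (simp add: r_def mult.assoc[symmetric])
    have s3: "(\<alpha> * sqrt (2*E))^2 = 2 * E"
    proof -
      have "(\<alpha> * sqrt (2*E))^2 = (\<alpha>*\<alpha>) * (sqrt (2*E) * sqrt (2*E))" by (simp add: power2_eq_square mult_ac)
      then show ?thesis using alpha_sq[OF al] Ep by simp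
    qed
    show "(1 / sqrt (2*E)) *\<^sub>R K (\<alpha> * sqrt (2*E)) = complex_of_real (1 / sqrt (2*pi)) * (exp (\<i> * complex_of_real (t * E)) * gE \<alpha> f E)"
      unfolding K_def gE_def using Ep rp
      apply (simp only: s1 s3 rr[symmetric] r_def[symmetric] if_True)
      apply (simp add: scaleR_conv_of_real rr field_simps)
      apply (rule disjI2)
      using rr by (simp add: mult.commute flip: of_real_mult)
  qed
  also have "\<dots> = (\<integral>E. complex_of_real (1 / sqrt (2*pi)) * (exp (\<i> * complex_of_real (t * E)) * gE \<alpha> f E) \<partial>lborel)"
  proof (rule cs_integrable(2)[symmetric])
    show "continuous_on {a^2/2..b^2/2} (\<lambda>E. complex_of_real (1 / sqrt (2*pi)) * (exp (\<i> * complex_of_real (t * E)) * gE \<alpha> f E))"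
      by (intro continuous_intros continuous_on_subset[OF gc]) auto
    show "x \<in> {a^2/2..b^2/2}" if "complex_of_real (1 / sqrt (2*pi)) * (exp (\<i> * complex_of_real (t * x)) * gE \<alpha> f x) \<noteq> 0" for x
      using that gE_supp[OF al a(1) fs, of x] by auto
  qed
  also have "\<dots> = complex_of_real (1 / sqrt (2*pi)) * FT (gE \<alpha> f) t"
    unfolding FT_def by (rule integral_mult_right_zero)
  finally show ?thesis .
qed

lemma phi_parseval1:
  assumes al: "\<alpha> \<in> {1,-1}" and a: "0 < a" "a \<le> b"
    and c1: "continuous_on UNIV f1" and s1: "supp_in a b f1"
    and c2: "continuous_on UNIV f2" and s2: "supp_in a b f2"
    and int: "integrable lborel (\<lambda>t. cnj (phi_trans f1 t \<alpha>) * phi_trans f2 t \<alpha>)"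
  shows "(\<integral>t. cnj (phi_trans f1 t \<alpha>) * phi_trans f2 t \<alpha> \<partial>lborel) = integral {lo \<alpha> a b..hi \<alpha> a b} (\<lambda>p. cnj (f1 p) * f2 p)"
proof -
  define g1 where "g1 = gE \<alpha> f1"
  define g2 where "g2 = gE \<alpha> f2"
  have gc1: "continuous_on UNIV g1" unfolding g1_def by (rule gE_cont[OF al a(1) c1 s1])
  have gc2: "continuous_on UNIV g2" unfolding g2_def by (rule gE_cont[OF al a(1) c2 s2])
  have cc: "cnj (complex_of_real (1 / sqrt (2*pi))) * complex_of_real (1 / sqrt (2*pi)) = complex_of_real (1 / (2*pi))"
    by (simp flip: of_real_mult)
  have e: "cnj (phi_trans f1 t \<alpha>) * phi_trans f2 t \<alpha> = complex_of_real (1 / (2*pi)) * (cnj (FT g1 t) * FT g2 t)" for t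
  proof -
    have "cnj (complex_of_real (1 / sqrt (2*pi)) * FT g1 t) * (complex_of_real (1 / sqrt (2*pi)) * FT g2 t)
      = (cnj (complex_of_real (1 / sqrt (2*pi))) * complex_of_real (1 / sqrt (2*pi))) * (cnj (FT g1 t) * FT g2 t)"
      by (simp only: complex_cnj_mult mult_ac)
    then show ?thesis
      unfolding phi_rep[OF al a c1 s1] phi_rep[OF al a c2 s2] g1_def[symmetric] g2_def[symmetric] cc by simp
  qed
  have int2: "integrable lborel (\<lambda>t. cnj (FT g1 t) * FT g2 t)"
  proof -
    have "integrable lborel (\<lambda>t. complex_of_real (2*pi) * (cnj (phi_trans f1 t \<alpha>) * phi_trans f2 t \<alpha>))"
      using int by (rule integrable_mult_right)
    moreover have "complex_of_real (2*pi) * (cnj (phi_trans f1 t \<alpha>) * phi_trans f2 t \<alpha>) = cnj (FT g1 t) * FT g2 t" for t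
      unfolding e by (simp del: of_real_mult add: of_real_mult[symmetric] mult.assoc[symmetric])
    ultimately show ?thesis by simp
  qed
  have ab2: "a^2/2 \<le> b^2/2" using a by (simp add: power_mono)
  have "(\<integral>t. cnj (phi_trans f1 t \<alpha>) * phi_trans f2 t \<alpha> \<partial>lborel) = complex_of_real (1 / (2*pi)) * (\<integral>t. cnj (FT g1 t) * FT g2 t \<partial>lborel)"
    unfolding e by (rule integral_mult_right_zero)
  also have "\<dots> = complex_of_real (1 / (2*pi)) * (2 * pi * (\<integral>x. cnj (g1 x) * g2 x \<partial>lborel))"
  proof -
    have "(\<integral>t. cnj (FT g1 t) * FT g2 t \<partial>lborel) = 2 * pi * (\<integral>x. cnj (g1 x) * g2 x \<partial>lborel)"
    proof (rule parseval_ft[OF gc1 gc2 ab2 _ _ int2])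
      show "x \<in> {a^2/2..b^2/2}" if "g1 x \<noteq> 0" for x using that gE_supp[OF al a(1) s1] unfolding g1_def by blast
      show "x \<in> {a^2/2..b^2/2}" if "g2 x \<noteq> 0" for x using that gE_supp[OF al a(1) s2] unfolding g2_def by blast
    qed
    then show ?thesis by simp
  qed
  also have "\<dots> = (\<integral>x. cnj (g1 x) * g2 x \<partial>lborel)" by simp
  also have "\<dots> = integral {a^2/2..b^2/2} (\<lambda>x. cnj (g1 x) * g2 x)"
  proof (rule cs_integrable(2))
    show "continuous_on {a^2/2..b^2/2} (\<lambda>x. cnj (g1 x) * g2 x)"
      by (intro continuous_intros continuous_on_subset[OF gc1] continuous_on_subset[OF gc2]) auto
    show "x \<in> {a^2/2..b^2/2}" if "cnj (g1 x) * g2 x \<noteq> 0" for x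
      using that gE_supp[OF al a(1) s1, of x] unfolding g1_def by auto
  qed
  also have "\<dots> = integral {a^2/2..b^2/2} (\<lambda>E. (1 / sqrt (2*E)) *\<^sub>R (cnj (f1 (\<alpha> * sqrt (2*E))) * f2 (\<alpha> * sqrt (2*E))))"
  proof (rule Henstock_Kurzweil_Integration.integral_cong)
    fix E assume E: "E \<in> {a^2/2..b^2/2}"
    then have Ep: "E > 0" using a by (auto intro: less_le_trans[of 0 "a^2/2"])
    define r where "r = sqrt (sqrt (2*E))"
    have rp: "r > 0" using Ep by (simp add: r_def)
    have rr: "complex_of_real r * complex_of_real r = complex_of_real (sqrt (2*E))" using Ep by (simp add: r_def flip: of_real_mult)
    show "cnj (g1 E) * g2 E = (1 / sqrt (2*E)) *\<^sub>R (cnj (f1 (\<alpha> * sqrt (2*E))) * f2 (\<alpha> * sqrt (2*E)))"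
      unfolding g1_def g2_def gE_def using Ep rp
      apply (simp add: r_def[symmetric] scaleR_conv_of_real rr[symmetric] field_simps)
      using Ep by (simp flip: of_real_mult add: mult.commute)
  qed
  also have "\<dots> = integral {lo \<alpha> a b..hi \<alpha> a b} (\<lambda>p. cnj (f1 p) * f2 p)"
    by (rule integral_unique, rule sub[OF al a])
       (intro continuous_intros continuous_on_subset[OF c1] continuous_on_subset[OF c2]; simp)
  finally show ?thesis .
qed



lemma e_deriv:
  "((\<lambda>p. exp (\<i> * complex_of_real (t * p^2 / 2))) has_vector_derivative
      (\<i> * complex_of_real (t * p)) * exp (\<i> * complex_of_real (t * p^2 / 2))) (at p within S)"
proof -
  have d1: "((\<lambda>p. t * p^2 / 2) has_vector_derivative (t * p)) (at p within S)"
    unfolding has_real_derivative_iff_has_vector_derivative[symmetric]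
    by (auto intro!: derivative_eq_intros)
  have d2: "(iexp has_vector_derivative \<i> * iexp (t * p^2 / 2)) (at (t * p^2 / 2) within (\<lambda>p. t * p^2 / 2) ` S)"
    by (rule has_vector_derivative_iexp)
  from vector_diff_chain_within[OF d1 d2] show ?thesis
    by (simp add: o_def scaleR_conv_of_real mult_ac)
qed

lemma w_deriv:
  assumes "\<alpha> * p > 0"
  shows "((\<lambda>x. sqrt (\<alpha> * x) / x) has_real_derivative (- (sqrt (\<alpha> * p) / (2 * p^2)))) (at p within S)"
proof -
  have p0: "p \<noteq> 0" using assms by auto
  have d1: "(sqrt has_real_derivative inverse (sqrt (\<alpha> * p)) / 2) (at (\<alpha> * p))" using assms by (rule DERIV_real_sqrt)
  have d2: "((\<lambda>x. \<alpha> * x) has_real_derivative \<alpha>) (at p within S)" by (auto intro!: derivative_eq_intros)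
  have d3: "((\<lambda>x. sqrt (\<alpha> * x)) has_real_derivative inverse (sqrt (\<alpha> * p)) / 2 * \<alpha>) (at p within S)"
    using DERIV_chain2[OF d1 d2] .
  have d4: "((\<lambda>x. sqrt (\<alpha> * x) / x) has_real_derivative ((inverse (sqrt (\<alpha> * p)) / 2 * \<alpha>) * p - sqrt (\<alpha> * p) * 1) / (p * p)) (at p within S)"
    using DERIV_divide[OF d3 DERIV_ident p0] .
  have s: "sqrt (\<alpha> * p) * sqrt (\<alpha> * p) = \<alpha> * p" using assms by simp
  have "((inverse (sqrt (\<alpha> * p)) / 2 * \<alpha>) * p - sqrt (\<alpha> * p) * 1) / (p * p) = - (sqrt (\<alpha> * p) / (2 * p^2))"
  proof -
    have q: "\<alpha> * p / sqrt (\<alpha> * p) = sqrt (\<alpha> * p)" by (rule real_div_sqrt) (use assms in simp)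
    have "(inverse (sqrt (\<alpha> * p)) / 2 * \<alpha>) * p = (\<alpha> * p / sqrt (\<alpha> * p)) / 2" by (simp add: field_simps)
    then have "(inverse (sqrt (\<alpha> * p)) / 2 * \<alpha>) * p = sqrt (\<alpha> * p) / 2" by (simp only: q)
    then show ?thesis using p0 by (simp add: field_simps power2_eq_square)
  qed
  with d4 show ?thesis by simp
qed

lemma opT_formula:
  assumes d: "\<And>x. (f has_vector_derivative f' x) (at x)" and z: "\<And>x. \<bar>x\<bar> \<le> a \<Longrightarrow> f x = 0" and a: "a > 0"
  shows "opT f p = \<i> * (f' p / complex_of_real p - f p / complex_of_real (2 * p^2))"
proof (cases "p = 0")
  case True
  have "((\<lambda>x. complex_of_real (1 / (2 * x)) * f x) has_vector_derivative 0) (at 0)"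
  proof (rule has_vector_derivative_transform_within_open[of "\<lambda>_. 0" 0 0 "ball 0 a"])
    show "((\<lambda>_. 0) has_vector_derivative 0) (at 0)" by (rule has_vector_derivative_const)
    show "0 \<in> ball (0::real) a" using a by simp
    show "0 = complex_of_real (1 / (2 * y)) * f y" if "y \<in> ball 0 a" for y
      using that z[of y] by (simp add: dist_real_def)
  qed simp
  then have "vector_derivative (\<lambda>x. complex_of_real (1 / (2 * x)) * f x) (at 0) = 0"
    by (rule vector_derivative_at)
  then show ?thesis using True by (simp add: opT_def)
next
  case False
  have dr: "((\<lambda>x. 1 / (2 * x)) has_real_derivative (-(1 / (2 * p^2)))) (at p)"
    using False by (auto intro!: derivative_eq_intros simp: field_simps power2_eq_square)
  have "((\<lambda>x. (1 / (2 * x)) *\<^sub>R f x) has_vector_derivative ((1 / (2 * p)) *\<^sub>R f' p + (-(1 / (2 * p^2))) *\<^sub>R f p)) (at p)"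
    by (rule has_vector_derivative_scaleR[OF dr d])
  then have vd: "vector_derivative (\<lambda>x. complex_of_real (1 / (2 * x)) * f x) (at p) = (1 / (2 * p)) *\<^sub>R f' p + (-(1 / (2 * p^2))) *\<^sub>R f p"
    by (intro vector_derivative_at) (simp add: scaleR_conv_of_real)
  have vf: "vector_derivative f (at p) = f' p" by (rule vector_derivative_at[OF d])
  show ?thesis unfolding opT_def vd vf using False
    by (simp add: scaleR_conv_of_real field_simps power2_eq_square)
qed

lemma phi_int:
  assumes al: "\<alpha> \<in> {1,-1}" and a: "0 < a" and fc: "continuous_on {lo \<alpha> a b..hi \<alpha> a b} f" and fs: "supp_in a b f"
  shows "phi_trans f t \<alpha> = integral {lo \<alpha> a b..hi \<alpha> a b} (\<lambda>p. complex_of_real (1 / sqrt (2*pi) * sqrt (\<alpha>*p)) * exp (\<i> * complex_of_real (t * p^2 / 2)) * f p)"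
proof -
  define K where "K p = complex_of_real (1 / sqrt (2*pi) * sqrt (\<alpha>*p)) * exp (\<i> * complex_of_real (t * p^2 / 2)) * f p" for p
  define I where "I = {lo \<alpha> a b..hi \<alpha> a b}"
  have zero: "p \<in> I" if "cnj (psi t \<alpha> p) * f p \<noteq> 0" for p
  proof -
    have fp: "a < \<bar>p\<bar>" "\<bar>p\<bar> < b" using that fs unfolding supp_in_def by auto
    have "heaviside (\<alpha>*p) \<noteq> 0" using that by (auto simp: psi_cnj)
    then have "\<alpha>*p \<ge> 0" by (auto simp: heaviside_def split: if_splits)
    then have "\<bar>p\<bar> = \<alpha>*p" using al by auto
    then show ?thesis using fp al unfolding I_def by (subst in_lohi) auto
  qed
  have eqK: "cnj (psi t \<alpha> p) * f p = K p" if "p \<in> I" for p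
  proof -
    have "a \<le> \<alpha>*p" using that al unfolding I_def by (subst (asm) in_lohi) auto
    then have "\<alpha>*p > 0" using a by auto
    moreover have "\<bar>p\<bar> = \<alpha>*p" using al \<open>\<alpha>*p > 0\<close> by auto
    ultimately show ?thesis by (simp add: psi_cnj K_def heaviside_def)
  qed
  have contK: "continuous_on I K" unfolding K_def I_def
    by (intro continuous_intros fc) auto
  have cont: "continuous_on I (\<lambda>p. cnj (psi t \<alpha> p) * f p)"
    using continuous_on_cong[of I I "\<lambda>p. cnj (psi t \<alpha> p) * f p" K] contK eqK by auto
  have "phi_trans f t \<alpha> = integral I (\<lambda>p. cnj (psi t \<alpha> p) * f p)"
    unfolding phi_trans_def I_def using cs_integrable(2)[OF cont[unfolded I_def]] zero[unfolded I_def] by blast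
  also have "\<dots> = integral I K" by (rule Henstock_Kurzweil_Integration.integral_cong) (rule eqK)
  finally show ?thesis unfolding K_def I_def .
qed

lemma phi_opT:
  assumes al: "\<alpha> \<in> {1,-1}" and a: "0 < a" "a < b"
    and d: "\<And>x. (f has_vector_derivative f' x) (at x)"
    and fc: "continuous_on UNIV f" and f'c: "continuous_on UNIV f'"
    and fs: "supp_in a b f" and f's: "supp_in a b f'"
  shows "phi_trans (opT f) t \<alpha> = complex_of_real t * phi_trans f t \<alpha>"
proof -
  define I where "I = {lo \<alpha> a b..hi \<alpha> a b}"
  have z: "f x = 0" if "\<bar>x\<bar> \<le> a" for x using fs that unfolding supp_in_def by force
  have opf: "opT f = (\<lambda>p. \<i> * (f' p / complex_of_real p - f p / complex_of_real (2 * p^2)))"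
    using opT_formula[OF d z a(1)] by auto
  have Ip: "p \<in> I \<Longrightarrow> \<alpha> * p \<ge> a \<and> \<alpha> * p \<le> b" for p unfolding I_def using in_lohi[OF al] by blast
  have Inz: "p \<in> I \<Longrightarrow> p \<noteq> 0" for p using Ip a by force
  have ops: "supp_in a b (opT f)" using fs f's unfolding opf supp_in_def by force
  have opc: "continuous_on I (opT f)" unfolding opf
    by (intro continuous_intros continuous_on_subset[OF fc] continuous_on_subset[OF f'c]) (auto dest: Inz)
  have fcI: "continuous_on I f" by (rule continuous_on_subset[OF fc]) auto
  define e where "e p = exp (\<i> * complex_of_real (t * p^2 / 2))" for p
  define K0 where "K0 p = complex_of_real (sqrt (\<alpha>*p)) * e p * f p" for p
  define Kop where "Kop p = complex_of_real (sqrt (\<alpha>*p)) * e p * opT f p" for p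
  define w where "w x = sqrt (\<alpha> * x) / x" for x
  define D where "D p = e p * (w p *\<^sub>R f' p + (- (sqrt (\<alpha> * p) / (2 * p^2))) *\<^sub>R f p) + (\<i> * complex_of_real (t * p)) * e p * (w p *\<^sub>R f p)" for p
  have ecI: "continuous_on I e" unfolding e_def by (intro continuous_intros) auto
  have K0c: "continuous_on I K0" unfolding K0_def by (intro continuous_intros fcI ecI)
  have le: "lo \<alpha> a b \<le> hi \<alpha> a b" using a al by (auto simp: lo_def hi_def)
  have deriv: "((\<lambda>p. e p * (w p *\<^sub>R f p)) has_vector_derivative D p) (at p within I)" if "p \<in> I" for p
  proof -
    have ap: "\<alpha> * p > 0" using Ip[OF that] a by auto
    have "((\<lambda>p. e p * (w p *\<^sub>R f p)) has_vector_derivative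
        e p * (w p *\<^sub>R f' p + (- (sqrt (\<alpha> * p) / (2 * p^2))) *\<^sub>R f p) + (\<i> * complex_of_real (t * p)) * e p * (w p *\<^sub>R f p)) (at p within I)"
      unfolding e_def w_def
      by (intro has_vector_derivative_mult e_deriv has_vector_derivative_scaleR w_deriv[OF ap]
            has_vector_derivative_at_within[OF d])
    then show ?thesis unfolding D_def .
  qed
  have endpoints: "f (lo \<alpha> a b) = 0" "f (hi \<alpha> a b) = 0"
  proof -
    have h: "f x = 0" if "\<bar>x\<bar> = a \<or> \<bar>x\<bar> = b" for x using fs that unfolding supp_in_def by fastforce
    have "f a = 0" "f b = 0" "f (-a) = 0" "f (-b) = 0" using a by (auto intro!: h)
    then show "f (lo \<alpha> a b) = 0" "f (hi \<alpha> a b) = 0" unfolding lo_def hi_def by auto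
  qed
  have "(D has_integral ((e (hi \<alpha> a b) * (w (hi \<alpha> a b) *\<^sub>R f (hi \<alpha> a b))) - (e (lo \<alpha> a b) * (w (lo \<alpha> a b) *\<^sub>R f (lo \<alpha> a b))))) I"
    unfolding I_def by (rule fundamental_theorem_of_calculus[OF le]) (use deriv I_def in auto)
  then have Dint: "(D has_integral 0) I" using endpoints by simp
  have Deq: "Kop p = complex_of_real t * K0 p + \<i> * D p" if "p \<in> I" for p
  proof -
    have p0: "p \<noteq> 0" using Inz[OF that] .
    show ?thesis unfolding Kop_def K0_def D_def w_def opf using p0
      by (simp add: scaleR_conv_of_real field_simps power2_eq_square)
  qed
  define J where "J = integral I K0"
  have K0int: "(K0 has_integral J) I" unfolding J_def I_def
    by (rule integrable_integral, rule integrable_continuous_interval) (use K0c I_def in simp)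
  have "((\<lambda>p. complex_of_real t * K0 p + \<i> * D p) has_integral (complex_of_real t * J + \<i> * 0)) I"
    by (intro has_integral_add has_integral_mult_right K0int Dint)
  then have "((\<lambda>p. complex_of_real t * K0 p + \<i> * D p) has_integral (complex_of_real t * J)) I" by simp
  then have Kopint: "(Kop has_integral (complex_of_real t * J)) I"
    by (rule has_integral_eq[rotated]) (use Deq in simp)
  have "phi_trans (opT f) t \<alpha> = integral I (\<lambda>p. complex_of_real (1 / sqrt (2*pi)) * Kop p)"
    unfolding phi_int[OF al a(1) opc[unfolded I_def] ops] I_def[symmetric] Kop_def e_def
    by (rule Henstock_Kurzweil_Integration.integral_cong) (simp add: mult_ac)
  also have "\<dots> = complex_of_real (1 / sqrt (2*pi)) * (complex_of_real t * J)"
    by (rule integral_unique, rule has_integral_mult_right, rule Kopint)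
  also have "phi_trans f t \<alpha> = integral I (\<lambda>p. complex_of_real (1 / sqrt (2*pi)) * K0 p)"
    unfolding phi_int[OF al a(1) fcI[unfolded I_def] fs] I_def[symmetric] K0_def e_def
    by (rule Henstock_Kurzweil_Integration.integral_cong) (simp add: mult_ac)
  moreover have "\<dots> = complex_of_real (1 / sqrt (2*pi)) * J"
    by (rule integral_unique, rule has_integral_mult_right, rule K0int)
  ultimately show ?thesis by (simp add: mult_ac)
qed



lemma phi_parseval:
  assumes a: "0 < a" "a < b"
    and c1: "continuous_on UNIV f1" and s1: "supp_in a b f1"
    and c2: "continuous_on UNIV f2" and s2: "supp_in a b f2"
    and int: "\<And>\<alpha>. \<alpha> \<in> {1,-1} \<Longrightarrow> integrable lborel (\<lambda>t. cnj (phi_trans f1 t \<alpha>) * phi_trans f2 t \<alpha>)"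
  shows "(\<Sum>\<alpha>\<in>{1,-1::real}. \<integral>t. cnj (phi_trans f1 t \<alpha>) * phi_trans f2 t \<alpha> \<partial>lborel) = inner_L2 f1 f2"
proof -
  define k where "k p = cnj (f1 p) * f2 p" for p
  have kc: "continuous_on UNIV k" unfolding k_def by (intro continuous_intros c1 c2)
  have kz: "k p = 0" if "\<bar>p\<bar> \<le> a \<or> \<bar>p\<bar> \<ge> b" for p
    using s1 that unfolding supp_in_def k_def by force
  have ki: "k integrable_on {x..y}" for x y by (rule integrable_continuous_interval, rule continuous_on_subset[OF kc]) auto
  have "(\<Sum>\<alpha>\<in>{1,-1::real}. \<integral>t. cnj (phi_trans f1 t \<alpha>) * phi_trans f2 t \<alpha> \<partial>lborel)
      = integral {a..b} k + integral {-b..-a} k"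
    using phi_parseval1[OF _ a(1) less_imp_le[OF a(2)] c1 s1 c2 s2 int, of 1]
      phi_parseval1[OF _ a(1) less_imp_le[OF a(2)] c1 s1 c2 s2 int, of "-1"]
    by (simp add: lo_def hi_def k_def[abs_def])
  also have "\<dots> = integral {-b..b} k"
  proof -
    have m: "integral {-a..a} k = 0"
    proof -
      have "integral {-a..a} k = integral {-a..a} (\<lambda>_. 0::complex)"
        by (rule Henstock_Kurzweil_Integration.integral_cong) (rule kz, auto)
      then show ?thesis by simp
    qed
    have "integral {-a..a} k + integral {a..b} k = integral {-a..b} k"
      by (rule Henstock_Kurzweil_Integration.integral_combine) (use a ki in auto)
    moreover have "integral {-b..-a} k + integral {-a..b} k = integral {-b..b} k"
      by (rule Henstock_Kurzweil_Integration.integral_combine) (use a ki in auto)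
    ultimately show ?thesis using m by (simp add: add.commute)
  qed
  also have "\<dots> = inner_L2 f1 f2"
    unfolding inner_L2_def k_def[symmetric]
  proof (rule cs_integrable(2)[symmetric])
    show "continuous_on {-b..b} k" using kc by (rule continuous_on_subset) auto
    fix x assume "k x \<noteq> 0"
    then have "\<not> (b \<le> \<bar>x\<bar>)" using kz by blast
    then show "x \<in> {-b..b}" by auto
  qed
  finally show ?thesis .
qed

lemma phi_bound:
  assumes al: "\<alpha> \<in> {1,-1}" and a: "0 < a" "a < b" and fc: "continuous_on UNIV f" and fs: "supp_in a b f"
  obtains C where "\<And>t. norm (phi_trans f t \<alpha>) \<le> C"
proof -
  have fz: "f x \<noteq> 0 \<Longrightarrow> x \<in> {-b..b}" for x using fs unfolding supp_in_def by force
  obtain M where M: "M \<ge> 0" "\<And>x. norm (f x) \<le> M"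
    using cs_bound[of "-b" b f] fc fz continuous_on_subset by blast
  define I where "I = {lo \<alpha> a b..hi \<alpha> a b}"
  define B where "B = 1 / sqrt (2*pi) * sqrt b * M"
  have B0: "B \<ge> 0" unfolding B_def using M a by simp
  have "norm (phi_trans f t \<alpha>) \<le> B * measure lborel I" for t
  proof -
    define K where "K p = complex_of_real (1 / sqrt (2*pi) * sqrt (\<alpha>*p)) * exp (\<i> * complex_of_real (t * p^2 / 2)) * f p" for p
    have Kc: "continuous_on I K" unfolding K_def I_def
      by (intro continuous_intros continuous_on_subset[OF fc]) auto
    have "(K has_integral integral I K) I" unfolding I_def
      by (rule integrable_integral, rule integrable_continuous_interval) (use Kc I_def in simp)
    moreover have "phi_trans f t \<alpha> = integral I K"
      unfolding I_def K_def by (rule phi_int[OF al a(1) continuous_on_subset[OF fc] fs]) auto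
    moreover have "norm (K p) \<le> B" if "p \<in> I" for p
    proof -
      have "\<alpha> * p \<le> b" "a \<le> \<alpha> * p" using that in_lohi[OF al] unfolding I_def by auto
      then have "sqrt (\<alpha>*p) \<le> sqrt b" "\<alpha>*p \<ge> 0" using a by auto
      have n1: "norm (exp (\<i> * complex_of_real (t * p^2 / 2))) = 1" by (rule norm_exp_i_times)
      have "norm (K p) = 1 / sqrt (2*pi) * sqrt (\<alpha>*p) * norm (f p)"
        unfolding K_def norm_mult n1 norm_of_real using \<open>\<alpha>*p \<ge> 0\<close> by simp
      also have "\<dots> \<le> 1 / sqrt (2*pi) * sqrt b * M"
        using M \<open>sqrt (\<alpha>*p) \<le> sqrt b\<close> \<open>\<alpha>*p \<ge> 0\<close> a by (intro mult_mono mult_left_mono) auto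
      finally show ?thesis unfolding B_def .
    qed
    ultimately show ?thesis unfolding I_def
      using has_integral_bound_real[OF B0, of "{}" K _ "lo \<alpha> a b" "hi \<alpha> a b"] by auto
  qed
  then show ?thesis using that by blast
qed

lemma phi_meas:
  assumes "continuous_on UNIV f"
  shows "(\<lambda>t. phi_trans f t \<alpha>) \<in> borel_measurable lborel"
proof -
  have [measurable]: "f \<in> borel_measurable lborel" using borel_measurable_continuous_onI[OF assms] by simp
  show ?thesis unfolding phi_trans_def psi_def heaviside_def by measurable
qed



lemma domT_props:
  assumes "\<phi> \<in> domT"
  obtains D a b where "0 < a" "a < b" "D 0 = \<phi>"
    "\<And>n x. (D n has_vector_derivative D (Suc n) x) (at x)"
    "\<And>n. supp_in a b (D n)" "\<And>n. continuous_on UNIV (D n)"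
proof -
  from assms obtain D where D0: "D 0 = \<phi>" and Dd: "\<And>n x. (D n has_vector_derivative D (Suc n) x) (at x)"
    unfolding domT_def smooth_fun_def by blast
  define S where "S = supp_cl \<phi>"
  have cS: "compact S" and S0: "S \<subseteq> - {0}" using assms unfolding domT_def S_def by auto
  obtain R where R: "R > 0" "\<And>x. x \<in> S \<Longrightarrow> norm x \<le> R"
    using compact_imp_bounded[OF cS] bounded_pos by metis
  have "open (- S)" using compact_imp_closed[OF cS] by auto
  moreover have "(0::real) \<in> - S" using S0 by auto
  ultimately obtain \<delta> where \<delta>: "\<delta> > 0" "ball 0 \<delta> \<subseteq> - S" using open_contains_ball by blast
  have inS: "p \<in> S" if "\<phi> p \<noteq> 0" for p unfolding S_def supp_cl_def
    by (rule closure_subset[THEN subsetD]) (use that in simp)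
  define U where "U = {x::real. \<bar>x\<bar> < \<delta>} \<union> {x. \<bar>x\<bar> > R}"
  have oU: "open U" unfolding U_def
    by (intro open_Un open_Collect_less continuous_intros)
  have zU: "D n x = 0" if "x \<in> U" for n x
    using that
  proof (induction n arbitrary: x)
    case 0
    show ?case
    proof (rule ccontr)
      assume "D 0 x \<noteq> 0"
      then have "x \<in> S" using inS D0 by auto
      then have "norm x \<le> R" "x \<notin> ball 0 \<delta>" using R \<delta> by auto
      then show False using 0 unfolding U_def by (auto simp: dist_real_def)
    qed
  next
    case (Suc n)
    have "(D n has_vector_derivative 0) (at x)"
    proof (rule has_vector_derivative_transform_within_open[of "\<lambda>_. 0" 0 x U])
      show "((\<lambda>_. 0) has_vector_derivative 0) (at x)" by (rule has_vector_derivative_const)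
      show "open U" by (rule oU)
      show "x \<in> U" by (rule Suc.prems)
      show "0 = D n y" if "y \<in> U" for y using Suc.IH[OF that] by simp
    qed
    then show ?case using vector_derivative_unique_at[OF Dd[of n x]] by simp
  qed
  define a where "a = \<delta> / 2"
  define b where "b = R + \<delta>"
  have supp: "supp_in a b (D n)" for n
    unfolding supp_in_def
  proof (intro allI impI)
    fix p assume "D n p \<noteq> 0"
    then have "p \<notin> U" using zU by blast
    then show "a < \<bar>p\<bar> \<and> \<bar>p\<bar> < b" unfolding U_def a_def b_def using \<delta> by auto
  qed
  have cont: "continuous_on UNIV (D n)" for n
    using Dd by (intro continuous_at_imp_continuous_on ballI has_vector_derivative_continuous) auto
  show ?thesis
  proof (rule that[of a b D])
    show "0 < a" unfolding a_def using \<delta> by simp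
    show "a < b" unfolding a_def b_def using \<delta> R by simp
    show "D 0 = \<phi>" by (rule D0)
    show "(D n has_vector_derivative D (Suc n) x) (at x)" for n x by (rule Dd)
    show "supp_in a b (D n)" for n by (rule supp)
    show "continuous_on UNIV (D n)" for n by (rule cont)
  qed
qed

lemma deriv_scal:
  fixes g :: "real \<Rightarrow> complex" and a :: real
  assumes d: "\<And>x. (g has_vector_derivative g' x) (at x)"
    and z: "\<And>x. \<bar>x\<bar> \<le> a \<Longrightarrow> g x = 0 \<and> g' x = 0" and a: "a > 0"
    and r: "\<And>x. x \<noteq> 0 \<Longrightarrow> (r has_real_derivative r' x) (at x)"
  shows "((\<lambda>p. r p *\<^sub>R g p) has_vector_derivative (r x *\<^sub>R g' x + r' x *\<^sub>R g x)) (at x)"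
proof (cases "x = 0")
  case True
  have "((\<lambda>p. r p *\<^sub>R g p) has_vector_derivative 0) (at 0)"
  proof (rule has_vector_derivative_transform_within_open[of "\<lambda>_. 0" 0 0 "ball 0 a"])
    show "((\<lambda>_. 0) has_vector_derivative 0) (at 0)" by (rule has_vector_derivative_const)
    show "0 \<in> ball (0::real) a" using a by simp
    show "0 = r y *\<^sub>R g y" if "y \<in> ball 0 a" for y
      using that z[of y] by (simp add: dist_real_def)
  qed simp
  then show ?thesis using True z[of 0] a by simp
next
  case False
  then show ?thesis by (intro has_vector_derivative_scaleR r d)
qed

lemma cont_scal:
  fixes g :: "real \<Rightarrow> complex" and r :: "real \<Rightarrow> real" and a :: real
  assumes c: "continuous_on UNIV g"
    and z: "\<And>x. \<bar>x\<bar> \<le> a \<Longrightarrow> g x = 0" and a: "a > 0"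
    and r: "continuous_on (-{0}) r"
  shows "continuous_on UNIV (\<lambda>p. r p *\<^sub>R g p)"
proof (rule cont_two_opens[of "-{0}" "ball 0 a"])
  show "continuous_on (-{0}) (\<lambda>p. r p *\<^sub>R g p)"
    by (intro continuous_intros r continuous_on_subset[OF c]) auto
  have "continuous_on (ball 0 a) (\<lambda>_. 0::complex)" by simp
  moreover have "\<And>y. y \<in> ball 0 a \<Longrightarrow> r y *\<^sub>R g y = 0" using z by (simp add: dist_real_def)
  ultimately show "continuous_on (ball 0 a) (\<lambda>p. r p *\<^sub>R g p)"
    using continuous_on_cong[of "ball 0 a" "ball 0 a" "\<lambda>p. r p *\<^sub>R g p" "\<lambda>_. 0"] by auto
  show "- {0} \<union> ball 0 a = (UNIV::real set)" using a by auto
qed auto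



lemma supp_zero: "supp_in a b g \<Longrightarrow> \<not> (a < \<bar>x\<bar> \<and> \<bar>x\<bar> < b) \<Longrightarrow> g x = 0"
  unfolding supp_in_def by blast

lemma opT_chain:
  assumes "\<phi> \<in> domT"
  obtains a b where "0 < a" "a < b"
    "continuous_on UNIV \<phi>" "supp_in a b \<phi>"
    "continuous_on UNIV (opT \<phi>)" "supp_in a b (opT \<phi>)"
    "continuous_on UNIV (opT (opT \<phi>))" "supp_in a b (opT (opT \<phi>))"
    "\<And>t \<alpha>. \<alpha> \<in> {1,-1} \<Longrightarrow> phi_trans (opT \<phi>) t \<alpha> = complex_of_real t * phi_trans \<phi> t \<alpha>"
    "\<And>t \<alpha>. \<alpha> \<in> {1,-1} \<Longrightarrow> phi_trans (opT (opT \<phi>)) t \<alpha> = complex_of_real t * phi_trans (opT \<phi>) t \<alpha>"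
proof -
  obtain D a b where a: "0 < a" "a < b" and D0: "D 0 = \<phi>"
    and Dd: "\<And>n x. (D n has_vector_derivative D (Suc n) x) (at x)"
    and Ds: "\<And>n. supp_in a b (D n)" and Dc: "\<And>n. continuous_on UNIV (D n)"
    using domT_props[OF assms] by blast
  have Dz: "D n x = 0" if "\<bar>x\<bar> \<le> a" for n x using supp_zero[OF Ds[of n]] that by auto
  define r1 :: "real \<Rightarrow> real" where "r1 p = 1 / p" for p
  define r1' :: "real \<Rightarrow> real" where "r1' p = - 1 / p^2" for p
  define r2 :: "real \<Rightarrow> real" where "r2 p = 1 / (2 * p^2)" for p
  define r2' :: "real \<Rightarrow> real" where "r2' p = - 1 / p^3" for p
  have dr1: "(r1 has_real_derivative r1' x) (at x)" if "x \<noteq> 0" for x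
    unfolding r1_def r1'_def using that by (auto intro!: derivative_eq_intros simp: field_simps power2_eq_square)
  have dr2: "(r2 has_real_derivative r2' x) (at x)" if "x \<noteq> 0" for x
    unfolding r2_def r2'_def using that
    by (auto intro!: derivative_eq_intros simp: field_simps power2_eq_square power3_eq_cube)
  have cr: "continuous_on (-{0}) r1" "continuous_on (-{0}) r1'" "continuous_on (-{0}) r2" "continuous_on (-{0}) r2'"
    unfolding r1_def r1'_def r2_def r2'_def by (intro continuous_intros; auto)+
  define T1 where "T1 p = \<i> * (r1 p *\<^sub>R D 1 p - r2 p *\<^sub>R D 0 p)" for p
  define T1' where "T1' p = \<i> * ((r1 p *\<^sub>R D 2 p + r1' p *\<^sub>R D 1 p) - (r2 p *\<^sub>R D 1 p + r2' p *\<^sub>R D 0 p))" for p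
  define T2 where "T2 p = \<i> * (r1 p *\<^sub>R T1' p - r2 p *\<^sub>R T1 p)" for p
  have T1d: "(T1 has_vector_derivative T1' x) (at x)" for x
  proof -
    have z1: "\<bar>y\<bar> \<le> a \<Longrightarrow> D 1 y = 0 \<and> D 2 y = 0" for y using Dz by auto
    have z0: "\<bar>y\<bar> \<le> a \<Longrightarrow> D 0 y = 0 \<and> D 1 y = 0" for y using Dz by auto
    have "((\<lambda>p. r1 p *\<^sub>R D 1 p) has_vector_derivative (r1 x *\<^sub>R D 2 x + r1' x *\<^sub>R D 1 x)) (at x)"
      by (rule deriv_scal[OF _ z1 a(1) dr1]) (use Dd[of 1] in \<open>simp add: numeral_2_eq_2\<close>)
    moreover have "((\<lambda>p. r2 p *\<^sub>R D 0 p) has_vector_derivative (r2 x *\<^sub>R D 1 x + r2' x *\<^sub>R D 0 x)) (at x)"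
      by (rule deriv_scal[OF _ z0 a(1) dr2]) (use Dd[of 0] in simp)
    ultimately show ?thesis unfolding T1_def T1'_def
      by (intro has_vector_derivative_mult_right has_vector_derivative_diff)
  qed
  have opT1: "opT \<phi> = T1"
  proof
    fix p
    have "opT (D 0) p = \<i> * (D 1 p / complex_of_real p - D 0 p / complex_of_real (2 * p^2))"
      by (rule opT_formula[OF _ _ a(1)]) (use Dd[of 0] Dz in auto)
    then show "opT \<phi> p = T1 p" unfolding D0 T1_def r1_def r2_def
      by (simp add: scaleR_conv_of_real)
  qed
  have T1z: "T1 x = 0" "T1' x = 0" if "\<not> (a < \<bar>x\<bar> \<and> \<bar>x\<bar> < b)" for x
    unfolding T1_def T1'_def using supp_zero[OF Ds that] by simp_all
  have opT2: "opT (opT \<phi>) = T2"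
  proof
    fix p
    have "opT T1 p = \<i> * (T1' p / complex_of_real p - T1 p / complex_of_real (2 * p^2))"
      by (rule opT_formula[OF T1d _ a(1)]) (use T1z a in auto)
    then show "opT (opT \<phi>) p = T2 p" unfolding opT1 T2_def r1_def r2_def
      by (simp add: scaleR_conv_of_real)
  qed
  have T1s: "supp_in a b T1" "supp_in a b T1'" unfolding supp_in_def using T1z by blast+
  have T2s: "supp_in a b T2" unfolding supp_in_def
  proof (intro allI impI)
    fix p assume "T2 p \<noteq> 0"
    show "a < \<bar>p\<bar> \<and> \<bar>p\<bar> < b"
    proof (rule ccontr)
      assume n: "\<not> (a < \<bar>p\<bar> \<and> \<bar>p\<bar> < b)"
      have "T1 p = 0" "T1' p = 0" using T1z[OF n] by auto
      then have "T2 p = 0" unfolding T2_def by simp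
      then show False using \<open>T2 p \<noteq> 0\<close> by simp
    qed
  qed
  have Dz': "\<And>x. \<bar>x\<bar> \<le> a \<Longrightarrow> D n x = 0" for n using Dz by blast
  have T1c: "continuous_on UNIV T1" unfolding T1_def
    by (intro continuous_intros cont_scal[OF Dc Dz' a(1)] cr)
  have T1'c: "continuous_on UNIV T1'" unfolding T1'_def
    by (intro continuous_intros cont_scal[OF Dc Dz' a(1)] cr)
  have T1z': "\<And>x. \<bar>x\<bar> \<le> a \<Longrightarrow> T1 x = 0" "\<And>x. \<bar>x\<bar> \<le> a \<Longrightarrow> T1' x = 0" using T1z by auto
  have T2c: "continuous_on UNIV T2" unfolding T2_def
    by (intro continuous_intros cont_scal[OF T1c T1z'(1) a(1)] cont_scal[OF T1'c T1z'(2) a(1)] cr)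
  show ?thesis
  proof (rule that[OF a])
    show "continuous_on UNIV \<phi>" using Dc[of 0] D0 by simp
    show "supp_in a b \<phi>" using Ds[of 0] D0 by simp
    show "continuous_on UNIV (opT \<phi>)" using T1c opT1 by simp
    show "supp_in a b (opT \<phi>)" using T1s opT1 by simp
    show "continuous_on UNIV (opT (opT \<phi>))" using T2c opT2 by simp
    show "supp_in a b (opT (opT \<phi>))" using T2s opT2 by simp
    have Dd0: "(D 0 has_vector_derivative D 1 x) (at x)" for x using Dd[of 0 x] by simp
    fix t \<alpha> assume al: "\<alpha> \<in> {1,-1::real}"
    show "phi_trans (opT \<phi>) t \<alpha> = complex_of_real t * phi_trans \<phi> t \<alpha>"
      using phi_opT[OF al a Dd0 Dc[of 0] Dc[of 1] Ds[of 0] Ds[of 1]] D0 by simp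
    show "phi_trans (opT (opT \<phi>)) t \<alpha> = complex_of_real t * phi_trans (opT \<phi>) t \<alpha>"
      using phi_opT[OF al a T1d T1c T1'c T1s] opT1 by simp
  qed
qed



lemma inv1p_integrable: "integrable lborel (\<lambda>t::real. inverse (1 + t^2))"
  using integrable_inverse_1_plus_square unfolding set_integrable_def by simp

lemma alpha_facts:
  assumes al: "\<alpha> \<in> {1,-1}" and a: "0 < a" "a < b"
    and c0: "continuous_on UNIV f0" and s0: "supp_in a b f0"
    and c1: "continuous_on UNIV f1" and s1: "supp_in a b f1"
    and c2: "continuous_on UNIV f2" and s2: "supp_in a b f2"
    and r1: "\<And>t. phi_trans f1 t \<alpha> = complex_of_real t * phi_trans f0 t \<alpha>"
    and r2: "\<And>t. phi_trans f2 t \<alpha> = complex_of_real t * phi_trans f1 t \<alpha>"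
  shows "integrable lborel (\<lambda>t. t * (cmod (phi_trans f0 t \<alpha>))^2)"
    "integrable lborel (\<lambda>t. t^2 * (cmod (phi_trans f0 t \<alpha>))^2)"
    "integrable lborel (\<lambda>t. cnj (phi_trans f0 t \<alpha>) * phi_trans f1 t \<alpha>)"
    "integrable lborel (\<lambda>t. cnj (phi_trans f0 t \<alpha>) * phi_trans f2 t \<alpha>)"
    "\<And>t. cnj (phi_trans f0 t \<alpha>) * phi_trans f1 t \<alpha> = complex_of_real (t * (cmod (phi_trans f0 t \<alpha>))^2)"
    "\<And>t. cnj (phi_trans f0 t \<alpha>) * phi_trans f2 t \<alpha> = complex_of_real (t^2 * (cmod (phi_trans f0 t \<alpha>))^2)"
proof -
  define A where "A t = phi_trans f0 t \<alpha>" for t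
  obtain KA where KA: "\<And>t. norm (phi_trans f0 t \<alpha>) \<le> KA" using phi_bound[OF al a c0 s0] by blast
  obtain KB where KB: "\<And>t. norm (phi_trans f1 t \<alpha>) \<le> KB" using phi_bound[OF al a c1 s1] by blast
  obtain KC where KC: "\<And>t. norm (phi_trans f2 t \<alpha>) \<le> KC" using phi_bound[OF al a c2 s2] by blast
  have [measurable]: "(\<lambda>t. phi_trans f0 t \<alpha>) \<in> borel_measurable lborel" by (rule phi_meas[OF c0])
  have [measurable]: "(\<lambda>t. phi_trans f1 t \<alpha>) \<in> borel_measurable lborel" by (rule phi_meas[OF c1])
  have [measurable]: "(\<lambda>t. phi_trans f2 t \<alpha>) \<in> borel_measurable lborel" by (rule phi_meas[OF c2])
  have C: "phi_trans f2 t \<alpha> = complex_of_real (t^2) * A t" for t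
    unfolding r2 r1 A_def by (simp add: power2_eq_square)
  have dec: "norm (A t) \<le> (KA + KC) * inverse (1 + t^2)" for t
  proof -
    have "(1 + t^2) * norm (A t) = norm (A t) + norm (phi_trans f2 t \<alpha>)"
      unfolding C norm_mult norm_of_real by (simp add: algebra_simps)
    also have "\<dots> \<le> KA + KC" using KA[of t] KC[of t] unfolding A_def by simp
    finally have "(1 + t^2) * norm (A t) \<le> KA + KC" .
    moreover have "1 + t^2 > 0" by (simp add: add_pos_nonneg)
    ultimately show ?thesis by (simp add: field_simps)
  qed
  have e1: "cnj (phi_trans f0 t \<alpha>) * phi_trans f1 t \<alpha> = complex_of_real (t * (cmod (phi_trans f0 t \<alpha>))^2)" for t
    unfolding r1 complex_norm_square of_real_mult by (simp add: mult_ac)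
  have e2: "cnj (phi_trans f0 t \<alpha>) * phi_trans f2 t \<alpha> = complex_of_real (t^2 * (cmod (phi_trans f0 t \<alpha>))^2)" for t
    unfolding C A_def complex_norm_square of_real_mult by (simp add: mult_ac)
  have KB0: "KB \<ge> 0" using KB[of 0] norm_ge_zero order_trans by blast
  have KC0: "KC \<ge> 0" using KC[of 0] norm_ge_zero order_trans by blast
  have i1: "integrable lborel (\<lambda>t. t * (cmod (phi_trans f0 t \<alpha>))^2)"
  proof (rule Bochner_Integration.integrable_bound)
    show "integrable lborel (\<lambda>t. KB * ((KA + KC) * inverse (1 + t^2)))"
      using inv1p_integrable by (intro integrable_mult_right)
    show "(\<lambda>t. t * (cmod (phi_trans f0 t \<alpha>))^2) \<in> borel_measurable lborel" by measurable
    show "AE t in lborel. norm (t * (cmod (phi_trans f0 t \<alpha>))^2) \<le> norm (KB * ((KA + KC) * inverse (1 + t^2)))"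
    proof (rule AE_I2)
      fix t
      have "norm (t * (cmod (phi_trans f0 t \<alpha>))^2) = norm (phi_trans f1 t \<alpha>) * norm (A t)"
        unfolding r1 A_def by (simp add: norm_mult power2_eq_square abs_mult)
      also have "\<dots> \<le> KB * ((KA + KC) * inverse (1 + t^2))"
        using KB[of t] dec[of t] KB0 by (intro mult_mono) auto
      also have "\<dots> \<le> norm (KB * ((KA + KC) * inverse (1 + t^2)))" by simp
      finally show "norm (t * (cmod (phi_trans f0 t \<alpha>))^2) \<le> norm (KB * ((KA + KC) * inverse (1 + t^2)))" .
    qed
  qed
  have i2: "integrable lborel (\<lambda>t. t^2 * (cmod (phi_trans f0 t \<alpha>))^2)"
  proof (rule Bochner_Integration.integrable_bound)
    show "integrable lborel (\<lambda>t. KC * ((KA + KC) * inverse (1 + t^2)))"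
      using inv1p_integrable by (intro integrable_mult_right)
    show "(\<lambda>t. t^2 * (cmod (phi_trans f0 t \<alpha>))^2) \<in> borel_measurable lborel" by measurable
    show "AE t in lborel. norm (t^2 * (cmod (phi_trans f0 t \<alpha>))^2) \<le> norm (KC * ((KA + KC) * inverse (1 + t^2)))"
    proof (rule AE_I2)
      fix t
      have "norm (t^2 * (cmod (phi_trans f0 t \<alpha>))^2) = norm (phi_trans f2 t \<alpha>) * norm (A t)"
        unfolding C A_def by (simp add: norm_mult power2_eq_square abs_mult)
      also have "\<dots> \<le> KC * ((KA + KC) * inverse (1 + t^2))"
        using KC[of t] dec[of t] KC0 by (intro mult_mono) auto
      also have "\<dots> \<le> norm (KC * ((KA + KC) * inverse (1 + t^2)))" by simp
      finally show "norm (t^2 * (cmod (phi_trans f0 t \<alpha>))^2) \<le> norm (KC * ((KA + KC) * inverse (1 + t^2)))" .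
    qed
  qed
  show "integrable lborel (\<lambda>t. t * (cmod (phi_trans f0 t \<alpha>))^2)" by (rule i1)
  show "integrable lborel (\<lambda>t. t^2 * (cmod (phi_trans f0 t \<alpha>))^2)" by (rule i2)
  show "integrable lborel (\<lambda>t. cnj (phi_trans f0 t \<alpha>) * phi_trans f1 t \<alpha>)"
    unfolding e1 using i1 by (rule integrable_of_real)
  show "integrable lborel (\<lambda>t. cnj (phi_trans f0 t \<alpha>) * phi_trans f2 t \<alpha>)"
    unfolding e2 using i2 by (rule integrable_of_real)
  show "cnj (phi_trans f0 t \<alpha>) * phi_trans f1 t \<alpha> = complex_of_real (t * (cmod (phi_trans f0 t \<alpha>))^2)" for t by (rule e1)
  show "cnj (phi_trans f0 t \<alpha>) * phi_trans f2 t \<alpha> = complex_of_real (t^2 * (cmod (phi_trans f0 t \<alpha>))^2)" for t by (rule e2)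
qed



lemma core:
  assumes dom: "\<phi> \<in> domT"
  defines "S \<equiv> (\<lambda>t. \<Sum>\<alpha>\<in>{1,-1::real}. (cmod (phi_trans \<phi> t \<alpha>))^2)"
  shows "integrable lborel (\<lambda>t. S t * t)" "inner_L2 \<phi> (opT \<phi>) = complex_of_real (\<integral>t. S t * t \<partial>lborel)"
    "integrable lborel (\<lambda>t. S t * t^2)" "inner_L2 \<phi> (opT (opT \<phi>)) = complex_of_real (\<integral>t. S t * t^2 \<partial>lborel)"
proof -
  obtain a b where a: "0 < a" "a < b"
    and c0: "continuous_on UNIV \<phi>" and s0: "supp_in a b \<phi>"
    and c1: "continuous_on UNIV (opT \<phi>)" and s1: "supp_in a b (opT \<phi>)"
    and c2: "continuous_on UNIV (opT (opT \<phi>))" and s2: "supp_in a b (opT (opT \<phi>))"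
    and r1: "\<And>t \<alpha>. \<alpha> \<in> {1,-1} \<Longrightarrow> phi_trans (opT \<phi>) t \<alpha> = complex_of_real t * phi_trans \<phi> t \<alpha>"
    and r2: "\<And>t \<alpha>. \<alpha> \<in> {1,-1} \<Longrightarrow> phi_trans (opT (opT \<phi>)) t \<alpha> = complex_of_real t * phi_trans (opT \<phi>) t \<alpha>"
    using opT_chain[OF dom] by blast
  have F1: "integrable lborel (\<lambda>t. t * (cmod (phi_trans \<phi> t \<alpha>))^2)" if al: "\<alpha> \<in> {1,-1}" for \<alpha>
    using alpha_facts(1)[OF al a c0 s0 c1 s1 c2 s2 r1[OF al] r2[OF al]] .
  have F2: "integrable lborel (\<lambda>t. t^2 * (cmod (phi_trans \<phi> t \<alpha>))^2)" if al: "\<alpha> \<in> {1,-1}" for \<alpha>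
    using alpha_facts(2)[OF al a c0 s0 c1 s1 c2 s2 r1[OF al] r2[OF al]] .
  have F3: "integrable lborel (\<lambda>t. cnj (phi_trans \<phi> t \<alpha>) * phi_trans (opT \<phi>) t \<alpha>)" if al: "\<alpha> \<in> {1,-1}" for \<alpha>
    using alpha_facts(3)[OF al a c0 s0 c1 s1 c2 s2 r1[OF al] r2[OF al]] .
  have F4: "integrable lborel (\<lambda>t. cnj (phi_trans \<phi> t \<alpha>) * phi_trans (opT (opT \<phi>)) t \<alpha>)" if al: "\<alpha> \<in> {1,-1}" for \<alpha>
    using alpha_facts(4)[OF al a c0 s0 c1 s1 c2 s2 r1[OF al] r2[OF al]] .
  have F5: "cnj (phi_trans \<phi> t \<alpha>) * phi_trans (opT \<phi>) t \<alpha> = complex_of_real (t * (cmod (phi_trans \<phi> t \<alpha>))^2)" if al: "\<alpha> \<in> {1,-1}" for \<alpha> t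
    using alpha_facts(5)[OF al a c0 s0 c1 s1 c2 s2 r1[OF al] r2[OF al]] .
  have F6: "cnj (phi_trans \<phi> t \<alpha>) * phi_trans (opT (opT \<phi>)) t \<alpha> = complex_of_real (t^2 * (cmod (phi_trans \<phi> t \<alpha>))^2)" if al: "\<alpha> \<in> {1,-1}" for \<alpha> t
    using alpha_facts(6)[OF al a c0 s0 c1 s1 c2 s2 r1[OF al] r2[OF al]] .
  have S1: "S t * t = (\<Sum>\<alpha>\<in>{1,-1::real}. t * (cmod (phi_trans \<phi> t \<alpha>))^2)" for t
    unfolding S_def sum_distrib_right by (intro sum.cong refl) (simp add: mult.commute)
  have S2: "S t * t^2 = (\<Sum>\<alpha>\<in>{1,-1::real}. t^2 * (cmod (phi_trans \<phi> t \<alpha>))^2)" for t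
    unfolding S_def sum_distrib_right by (intro sum.cong refl) (simp add: mult.commute)
  show i1: "integrable lborel (\<lambda>t. S t * t)" unfolding S1 by (rule Bochner_Integration.integrable_sum) (rule F1, simp)
  show i2: "integrable lborel (\<lambda>t. S t * t^2)" unfolding S2 by (rule Bochner_Integration.integrable_sum) (rule F2, simp)
  have "inner_L2 \<phi> (opT \<phi>) = (\<Sum>\<alpha>\<in>{1,-1::real}. \<integral>t. cnj (phi_trans \<phi> t \<alpha>) * phi_trans (opT \<phi>) t \<alpha> \<partial>lborel)"
    by (rule phi_parseval[OF a c0 s0 c1 s1, symmetric]) (rule F3)
  also have "\<dots> = (\<Sum>\<alpha>\<in>{1,-1::real}. complex_of_real (\<integral>t. t * (cmod (phi_trans \<phi> t \<alpha>))^2 \<partial>lborel))"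
  proof (rule sum.cong[OF refl])
    fix \<alpha> :: real assume al: "\<alpha> \<in> {1,-1}"
    show "(\<integral>t. cnj (phi_trans \<phi> t \<alpha>) * phi_trans (opT \<phi>) t \<alpha> \<partial>lborel) = complex_of_real (\<integral>t. t * (cmod (phi_trans \<phi> t \<alpha>))^2 \<partial>lborel)"
      by (simp only: F5[OF al] integral_complex_of_real)
  qed
  also have "\<dots> = complex_of_real (\<integral>t. S t * t \<partial>lborel)"
    unfolding S1 by (subst Bochner_Integration.integral_sum) (auto intro: F1)
  finally show "inner_L2 \<phi> (opT \<phi>) = complex_of_real (\<integral>t. S t * t \<partial>lborel)" .
  have "inner_L2 \<phi> (opT (opT \<phi>)) = (\<Sum>\<alpha>\<in>{1,-1::real}. \<integral>t. cnj (phi_trans \<phi> t \<alpha>) * phi_trans (opT (opT \<phi>)) t \<alpha> \<partial>lborel)"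
    by (rule phi_parseval[OF a c0 s0 c2 s2, symmetric]) (rule F4)
  also have "\<dots> = (\<Sum>\<alpha>\<in>{1,-1::real}. complex_of_real (\<integral>t. t^2 * (cmod (phi_trans \<phi> t \<alpha>))^2 \<partial>lborel))"
  proof (rule sum.cong[OF refl])
    fix \<alpha> :: real assume al: "\<alpha> \<in> {1,-1}"
    show "(\<integral>t. cnj (phi_trans \<phi> t \<alpha>) * phi_trans (opT (opT \<phi>)) t \<alpha> \<partial>lborel) = complex_of_real (\<integral>t. t^2 * (cmod (phi_trans \<phi> t \<alpha>))^2 \<partial>lborel)"
      by (simp only: F6[OF al] integral_complex_of_real)
  qed
  also have "\<dots> = complex_of_real (\<integral>t. S t * t^2 \<partial>lborel)"
    unfolding S2 by (subst Bochner_Integration.integral_sum) (auto intro: F2)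
  finally show "inner_L2 \<phi> (opT (opT \<phi>)) = complex_of_real (\<integral>t. S t * t^2 \<partial>lborel)" .
qed

theorem mainTheorem3:
  fixes \<phi> :: "real \<Rightarrow> complex"
  assumes "\<phi> \<in> domT"
    and "inner_L2 \<phi> \<phi> = 1"
  shows "integrable (tau_phi \<phi>) (\<lambda>t. t)
     \<and> inner_L2 \<phi> (opT \<phi>) = complex_of_real (\<integral>t. t \<partial>tau_phi \<phi>)
     \<and> integrable (tau_phi \<phi>) (\<lambda>t. t\<^sup>2)
     \<and> inner_L2 \<phi> (opT (opT \<phi>)) = complex_of_real (\<integral>t. t\<^sup>2 \<partial>tau_phi \<phi>)
     \<and> sigmaT_sq \<phi> = complex_of_real (var_tau \<phi>)"
proof -
  define S where "S = (\<lambda>t. \<Sum>\<alpha>\<in>{1,-1::real}. (cmod (phi_trans \<phi> t \<alpha>))^2)"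
  note C = core[OF assms(1), folded S_def]
  obtain a b where c0: "continuous_on UNIV \<phi>"
    using opT_chain[OF assms(1)] by blast
  have [measurable]: "(\<lambda>t. phi_trans \<phi> t \<alpha>) \<in> borel_measurable lborel" for \<alpha> by (rule phi_meas[OF c0])
  have Sm[measurable]: "S \<in> borel_measurable lborel" unfolding S_def by measurable
  have S0: "AE t in lborel. 0 \<le> S t" unfolding S_def by (intro AE_I2 sum_nonneg) auto
  have tau: "tau_phi \<phi> = density lborel S" unfolding tau_phi_def S_def ..
  have I1: "integrable (tau_phi \<phi>) (\<lambda>t. t)"
    unfolding tau using C(1) by (subst integrable_density[OF _ Sm S0]) (auto simp: S_def)
  have I2: "integrable (tau_phi \<phi>) (\<lambda>t. t\<^sup>2)"
    unfolding tau using C(3) by (subst integrable_density[OF _ Sm S0]) (auto simp: S_def)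
  have E1: "(\<integral>t. t \<partial>tau_phi \<phi>) = (\<integral>t. S t * t \<partial>lborel)"
    unfolding tau by (subst integral_density[OF _ Sm S0]) (auto simp: S_def)
  have E2: "(\<integral>t. t\<^sup>2 \<partial>tau_phi \<phi>) = (\<integral>t. S t * t\<^sup>2 \<partial>lborel)"
    unfolding tau by (subst integral_density[OF _ Sm S0]) (auto simp: S_def)
  have V: "sigmaT_sq \<phi> = complex_of_real (var_tau \<phi>)"
    unfolding sigmaT_sq_def var_tau_def mean_tau_def E1 E2 C(2) C(4) by (simp add: S_def)
  show ?thesis using I1 I2 C(2) C(4) E1 E2 V by (simp add: S_def)
qed


end
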